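(* Let $\mathcal{C}$ be a BMZ-collection in sufficiently general position, and let $\psi,\nu$ be rays in $\mathbb{R}^N$ emanating from $0$ that are both generic for $\mathcal{C}$. Then $\deg_\psi(\mathcal{C})=\deg_\nu(\mathcal{C})$.
   Context: Standing notation: $N=(d+1)(r-1)$; $w_1,\ldots,w_r\in\mathbb{R}^{r-1}$ the vertices of a regular $(r-1)$-simplex centered at $0$; $\varphi_i(x)=(x,1)\otimes w_i\in\mathbb{R}^N$ with $u\otimes v=(u_1v_1,\ldots,u_1v_n,u_2v_1,\ldots,u_mv_n)$; $\Phi(\mathcal{P})=\bigcup_i\{\varphi_i(p):p\in P_i\}$ for an $r$-tuple $\mathcal{P}$ of pairwise disjoint finite sets. A BMZ-collection is $\mathcal{C}=(C_1,\ldots,C_{d+2})$, pairwise disjoint finite subsets of $\mathbb{R}^d$, $|C_1|=\cdots=|C_{d+1}|=r-1$, $C_{d+2}=\{z\}$; ground set $C=\{c_1,\ldots,c_{N+1}\}$, $c_{N+1}=z$, $C_k=\{c_{(k-1)(r-1)+1},\ldots,c_{k(r-1)}\}$. Rainbow $r$-partition: $r$-tuple $(R_1,\ldots,R_r)$ of pairwise disjoint subsets of $C$ with $|R_i\cap C_j|\le1$; maximal if it covers $C$. $\mathbf{R}$: maximal rainbow $r$-partitions with $z\in R_r$. $\mathcal{R}-a$: remove $a$ from its class. $F_{\mathcal{R}}=\operatorname{conv}(\Phi(\mathcal{R}-z))$. Sufficiently general position: for all $\mathcal{R}\in\mathbf{R}$, $\Phi(\mathcal{R}-z)$ is affinely independent,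 and for all $\mathcal{R}\in\mathbf{R}$, $a\in C$, $0\notin\operatorname{aff}(\Phi(\mathcal{R}-a))$. A ray $\psi$ from $0$ is generic for $\mathcal{C}$ if it is disjoint from every ridge $\operatorname{conv}(\Phi(\mathcal{R}-z-a))$, $\mathcal{R}\in\mathbf{R}$, $a\in C\setminus\{z\}$. Signs: $\operatorname{gsgn}(\mathcal{R})=\operatorname{sgn}\det M$, where $M$ is the $N\times N$ matrix with row $j$ equal to $\varphi_i(c_j)$ for $c_j\in R_i$, $j\in[N]$. For $k\in[d+1]$, $\pi_k$ is the permutation of $[r]$ with $\pi_k(j)=i$ iff $c_{(k-1)(r-1)+j}\in R_i$ for $j\in[r-1]$, and $\pi_k(r)$ the remaining index; $\operatorname{csgn}(\mathcal{R})=\prod_k\operatorname{sgn}\pi_k$; $\operatorname{sgn}(\mathcal{R})=\operatorname{gsgn}(\mathcal{R})\operatorname{csgn}(\mathcal{R})$. $\deg_\psi(\mathcal{C})=\sum_{\mathcal{R}\in\mathbf{R}:\ \psi\cap F_{\mathcal{R}}\neq\emptyset}\operatorname{sgn}(\mathcal{R})$. *)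

theory Defs
  imports "Jordan_Normal_Form.Determinant" "HOL-Combinatorics.Permutations"
begin

text \<open>Vectors of varying dimension are Jordan_Normal_Form vectors (type real vec).
  Points of R^d are vectors in carrier_vec d; R^N is carrier_vec N.\<close>

definition bmzN :: "nat \<Rightarrow> nat \<Rightarrow> nat" where
  "bmzN d r = (d + 1) * (r - 1)"

definition tensor :: "real vec \<Rightarrow> real vec \<Rightarrow> real vec" where
  "tensor u v = vec (dim_vec u * dim_vec v) (\<lambda>k. u $ (k div dim_vec v) * v $ (k mod dim_vec v))"

definition hom1 :: "real vec \<Rightarrow> real vec" where
  "hom1 x = vec (dim_vec x + 1) (\<lambda>i. if i < dim_vec x then x $ i else 1)"

definition phi :: "(nat \<Rightarrow> real vec) \<Rightarrow> nat \<Rightarrow> real vec \<Rightarrow> real vec" where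
  "phi w i x = tensor (hom1 x) (w i)"

definition sqdist :: "real vec \<Rightarrow> real vec \<Rightarrow> real" where
  "sqdist x y = (\<Sum>k<dim_vec x. (x $ k - y $ k)^2)"

definition regular_simplex_centered :: "nat \<Rightarrow> (nat \<Rightarrow> real vec) \<Rightarrow> bool" where
  "regular_simplex_centered r w \<longleftrightarrow>
     (\<forall>i\<in>{1..r}. w i \<in> carrier_vec (r - 1)) \<and>
     (\<exists>s>0. \<forall>i\<in>{1..r}. \<forall>j\<in>{1..r}. i \<noteq> j \<longrightarrow> sqdist (w i) (w j) = s) \<and>
     vec (r - 1) (\<lambda>k. \<Sum>i\<in>{1..r}. w i $ k) = 0\<^sub>v (r - 1)"

definition lincomb :: "nat \<Rightarrow> (real vec \<Rightarrow> real) \<Rightarrow> real vec set \<Rightarrow> real vec" where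
  "lincomb n l S = vec n (\<lambda>k. \<Sum>v\<in>S. l v * v $ k)"

definition conv_hull :: "nat \<Rightarrow> real vec set \<Rightarrow> real vec set" where
  "conv_hull n S = {lincomb n l S | l. (\<forall>v\<in>S. 0 \<le> l v) \<and> sum l S = 1}"

definition aff_hull :: "nat \<Rightarrow> real vec set \<Rightarrow> real vec set" where
  "aff_hull n S = {lincomb n l S | l. sum l S = 1}"

definition aff_indep :: "nat \<Rightarrow> real vec set \<Rightarrow> bool" where
  "aff_indep n S \<longleftrightarrow>
     (\<forall>l. sum l S = 0 \<and> lincomb n l S = 0\<^sub>v n \<longrightarrow> (\<forall>v\<in>S. l v = 0))"

text \<open>BMZ-collection, given by the enumeration c_1,...,c_{N+1} of its ground set.\<close>
definition bmz :: "nat \<Rightarrow> nat \<Rightarrow> (nat \<Rightarrow> real vec) \<Rightarrow> bool" where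
  "bmz d r c \<longleftrightarrow> (\<forall>j\<in>{1..bmzN d r + 1}. c j \<in> carrier_vec d) \<and> inj_on c {1..bmzN d r + 1}"

definition groundC :: "nat \<Rightarrow> nat \<Rightarrow> (nat \<Rightarrow> real vec) \<Rightarrow> real vec set" where
  "groundC d r c = c ` {1..bmzN d r + 1}"

definition zpt :: "nat \<Rightarrow> nat \<Rightarrow> (nat \<Rightarrow> real vec) \<Rightarrow> real vec" where
  "zpt d r c = c (bmzN d r + 1)"

definition block :: "nat \<Rightarrow> nat \<Rightarrow> (nat \<Rightarrow> real vec) \<Rightarrow> nat \<Rightarrow> real vec set" where
  "block d r c k = (if k = d + 2 then {zpt d r c}
                    else c ` {(k - 1) * (r - 1) + 1 .. k * (r - 1)})"

text \<open>An r-tuple (R_1,...,R_r) is a function R with R i = {} outside [r].\<close>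
definition rainbow :: "nat \<Rightarrow> nat \<Rightarrow> (nat \<Rightarrow> real vec) \<Rightarrow> (nat \<Rightarrow> real vec set) \<Rightarrow> bool" where
  "rainbow d r c R \<longleftrightarrow>
     (\<forall>i. i \<notin> {1..r} \<longrightarrow> R i = {}) \<and>
     (\<forall>i\<in>{1..r}. R i \<subseteq> groundC d r c) \<and>
     (\<forall>i\<in>{1..r}. \<forall>i'\<in>{1..r}. i \<noteq> i' \<longrightarrow> R i \<inter> R i' = {}) \<and>
     (\<forall>i\<in>{1..r}. \<forall>k\<in>{1..d+2}. card (R i \<inter> block d r c k) \<le> 1)"

definition maximal_rainbow :: "nat \<Rightarrow> nat \<Rightarrow> (nat \<Rightarrow> real vec) \<Rightarrow> (nat \<Rightarrow> real vec set) \<Rightarrow> bool" where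
  "maximal_rainbow d r c R \<longleftrightarrow> rainbow d r c R \<and> (\<Union>i\<in>{1..r}. R i) = groundC d r c"

definition Rset :: "nat \<Rightarrow> nat \<Rightarrow> (nat \<Rightarrow> real vec) \<Rightarrow> (nat \<Rightarrow> real vec set) set" where
  "Rset d r c = {R. maximal_rainbow d r c R \<and> zpt d r c \<in> R r}"

definition rem :: "(nat \<Rightarrow> real vec set) \<Rightarrow> real vec \<Rightarrow> (nat \<Rightarrow> real vec set)" where
  "rem R a = (\<lambda>i. R i - {a})"

definition Phi :: "nat \<Rightarrow> (nat \<Rightarrow> real vec) \<Rightarrow> (nat \<Rightarrow> real vec set) \<Rightarrow> real vec set" where
  "Phi r w R = (\<Union>i\<in>{1..r}. phi w i ` R i)"

definition facet :: "nat \<Rightarrow> nat \<Rightarrow> (nat \<Rightarrow> real vec) \<Rightarrow> (nat \<Rightarrow> real vec)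
    \<Rightarrow> (nat \<Rightarrow> real vec set) \<Rightarrow> real vec set" where
  "facet d r w c R = conv_hull (bmzN d r) (Phi r w (rem R (zpt d r c)))"

definition suff_general_position :: "nat \<Rightarrow> nat \<Rightarrow> (nat \<Rightarrow> real vec) \<Rightarrow> (nat \<Rightarrow> real vec) \<Rightarrow> bool" where
  "suff_general_position d r w c \<longleftrightarrow>
     (\<forall>R\<in>Rset d r c. aff_indep (bmzN d r) (Phi r w (rem R (zpt d r c)))) \<and>
     (\<forall>R\<in>Rset d r c. \<forall>a\<in>groundC d r c.
        0\<^sub>v (bmzN d r) \<notin> aff_hull (bmzN d r) (Phi r w (rem R a)))"

definition ray :: "real vec \<Rightarrow> real vec set" where
  "ray u = {t \<cdot>\<^sub>v u | t. 0 \<le> t}"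

definition generic_ray :: "nat \<Rightarrow> nat \<Rightarrow> (nat \<Rightarrow> real vec) \<Rightarrow> (nat \<Rightarrow> real vec) \<Rightarrow> real vec set \<Rightarrow> bool" where
  "generic_ray d r w c \<psi> \<longleftrightarrow>
     (\<forall>R\<in>Rset d r c. \<forall>a\<in>groundC d r c - {zpt d r c}.
        \<psi> \<inter> conv_hull (bmzN d r) (Phi r w (rem (rem R (zpt d r c)) a)) = {})"

definition cls :: "nat \<Rightarrow> (nat \<Rightarrow> real vec set) \<Rightarrow> real vec \<Rightarrow> nat" where
  "cls r R p = (THE i. i \<in> {1..r} \<and> p \<in> R i)"

definition gsgn :: "nat \<Rightarrow> nat \<Rightarrow> (nat \<Rightarrow> real vec) \<Rightarrow> (nat \<Rightarrow> real vec) \<Rightarrow> (nat \<Rightarrow> real vec set) \<Rightarrow> real" where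
  "gsgn d r w c R = sgn (det (mat (bmzN d r) (bmzN d r)
      (\<lambda>(j, k). phi w (cls r R (c (j + 1))) (c (j + 1)) $ k)))"

definition pik :: "nat \<Rightarrow> (nat \<Rightarrow> real vec) \<Rightarrow> (nat \<Rightarrow> real vec set) \<Rightarrow> nat \<Rightarrow> nat \<Rightarrow> nat" where
  "pik r c R k j =
     (if j \<in> {1..r - 1} then cls r R (c ((k - 1) * (r - 1) + j))
      else if j = r then (THE i. i \<in> {1..r} \<and>
                 i \<notin> (\<lambda>j'. cls r R (c ((k - 1) * (r - 1) + j'))) ` {1..r - 1})
      else j)"

definition csgn :: "nat \<Rightarrow> nat \<Rightarrow> (nat \<Rightarrow> real vec) \<Rightarrow> (nat \<Rightarrow> real vec set) \<Rightarrow> real" where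
  "csgn d r c R = (\<Prod>k\<in>{1..d + 1}. real_of_int (sign (pik r c R k)))"

definition sgnR :: "nat \<Rightarrow> nat \<Rightarrow> (nat \<Rightarrow> real vec) \<Rightarrow> (nat \<Rightarrow> real vec) \<Rightarrow> (nat \<Rightarrow> real vec set) \<Rightarrow> real" where
  "sgnR d r w c R = gsgn d r w c R * csgn d r c R"

definition deg :: "nat \<Rightarrow> nat \<Rightarrow> (nat \<Rightarrow> real vec) \<Rightarrow> (nat \<Rightarrow> real vec) \<Rightarrow> real vec set \<Rightarrow> real" where
  "deg d r w c \<psi> = (\<Sum>R\<in>{R\<in>Rset d r c. \<psi> \<inter> facet d r w c R \<noteq> {}}. sgnR d r w c R)"

end

theory Submission
  imports Defs "HOL-Computational_Algebra.Polynomial"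
begin


lemma oneD:
  fixes g :: "real \<Rightarrow> real" and B :: "real set"
  assumes fin: "finite B" and b0: "0 \<notin> B" and b1: "1 \<notin> B"
    and loc: "\<forall>t0\<in>{0..1}. \<exists>c. \<forall>\<^sub>F t in nhds t0. t \<in> {0..1} - B \<longrightarrow> g t = c"
  shows "g 0 = g 1"
proof -
  define H where "H t0 = (SOME c. \<forall>\<^sub>F t in nhds t0. t \<in> {0..1} - B \<longrightarrow> g t = c)" for t0
  have Hev: "\<forall>\<^sub>F t in nhds t0. t \<in> {0..1} - B \<longrightarrow> g t = H t0" if "t0 \<in> {0..1}" for t0
    unfolding H_def using someI_ex[OF loc[rule_format, OF that]] .
  have Hpt: "g t0 = H t0" if "t0 \<in> {0..1} - B" for t0
    using eventually_nhds_x_imp_x[OF Hev[of t0]] that by auto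
  have "H 0 = H 1"
  proof (rule connected_local_const[of "{0..1}" 0 1 H])
    show "connected {0..(1::real)}" by simp
    show "\<forall>a\<in>{0..1}. \<forall>\<^sub>F b in at a within {0..1}. H a = H b"
    proof
      fix a :: real assume a: "a \<in> {0..1}"
      have op: "open (- (B - {a}))" using fin by (intro open_Compl finite_imp_closed) auto
      have e1: "\<forall>\<^sub>F t in nhds a. t \<in> - (B - {a})" by (rule eventually_nhds_in_open[OF op]) auto
      have "\<forall>\<^sub>F t in nhds a. t \<noteq> a \<longrightarrow> t \<in> {0..1} \<longrightarrow> H a = H t"
        using Hev[OF a] e1 
      proof eventually_elim
        case (elim t)
        then show ?case using Hpt[of t] by auto
      qed
      then show "\<forall>\<^sub>F b in at a within {0..1}. H a = H b" unfolding eventually_at_filter .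
    qed
  qed auto
  then show ?thesis using Hpt[of 0] Hpt[of 1] b0 b1 by auto
qed

lemma replace_col_adj:
  assumes A: "A \<in> carrier_mat n n" and b: "b \<in> carrier_vec n" and k: "k < n"
  shows "det (replace_col A b k) = row (adj_mat A) k \<bullet> b"
proof -
  have Ab: "replace_col A b k \<in> carrier_mat n n" using A by (auto simp: replace_col_def)
  show ?thesis unfolding scalar_prod_def using b k A
    by (subst laplace_expansion_column[OF Ab k], auto intro!: sum.cong arg_cong[of _ _ det] 
      arg_cong[of _ _ "\<lambda> x. _ * x"] eq_matI
      simp: replace_col_def adj_mat_def Matrix.row_def cofactor_def mat_delete_def ac_simps)
qed

locale core =
  fixes N :: nat and Rs :: "'r set" and A :: "'r \<Rightarrow> real mat" and cs :: "'r \<Rightarrow> real"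
    and P :: "'r \<Rightarrow> nat \<Rightarrow> 'r"
  assumes fin: "finite Rs"
  and Acar: "\<And>R. R \<in> Rs \<Longrightarrow> A R \<in> carrier_mat N N"
  and detnz: "\<And>R. R \<in> Rs \<Longrightarrow> det (A R) \<noteq> 0"
  and P_in: "\<And>R j. R \<in> Rs \<Longrightarrow> j < N \<Longrightarrow> P R j \<in> Rs"
  and P_col: "\<And>R j k i. R \<in> Rs \<Longrightarrow> j < N \<Longrightarrow> k < N \<Longrightarrow> k \<noteq> j \<Longrightarrow> i < N
      \<Longrightarrow> A (P R j) $$ (i,k) = A R $$ (i,k)"
  and P_inv: "\<And>R j. R \<in> Rs \<Longrightarrow> j < N \<Longrightarrow> P (P R j) j = R"
  and P_cs: "\<And>R j. R \<in> Rs \<Longrightarrow> j < N \<Longrightarrow> cs (P R j) = - cs R"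
begin

definition D where "D R j p = det (replace_col (A R) p j)"
definition ind where "ind R p \<longleftrightarrow> (\<forall>j<N. 0 \<le> D R j p * det (A R))"
definition h where "h R p = sgn (det (A R)) * cs R * (if ind R p then 1 else 0)"
definition F where "F p = (\<Sum>R\<in>Rs. h R p)"
definition gen where "gen p \<longleftrightarrow> (\<forall>R\<in>Rs. \<forall>j<N. D R j p = 0 \<longrightarrow> \<not> ind R p)"

lemma D_adj: "R \<in> Rs \<Longrightarrow> j < N \<Longrightarrow> p \<in> carrier_vec N \<Longrightarrow> D R j p = row (adj_mat (A R)) j \<bullet> p"
  unfolding D_def by (rule replace_col_adj[OF Acar])

lemma adjrow_car: "R \<in> Rs \<Longrightarrow> j < N \<Longrightarrow> row (adj_mat (A R)) j \<in> carrier_vec N"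
  using adj_mat(1)[OF Acar] by auto

lemma D_cramer: "R \<in> Rs \<Longrightarrow> j < N \<Longrightarrow> x \<in> carrier_vec N \<Longrightarrow> D R j (A R *\<^sub>v x) = x $ j * det (A R)"
  unfolding D_def by (rule cramer_lemma_mat[OF Acar])

lemma D_lin: assumes "R \<in> Rs" "j < N" "p \<in> carrier_vec N" "q \<in> carrier_vec N"
  shows "D R j (a \<cdot>\<^sub>v p + b \<cdot>\<^sub>v q) = a * D R j p + b * D R j q"
  using assms adjrow_car[OF assms(1,2)]
  by (simp add: D_adj scalar_prod_add_distrib[of _ N])

lemma D_repr: assumes R: "R \<in> Rs" and p: "p \<in> carrier_vec N"
  shows "p = A R *\<^sub>v vec N (\<lambda>j. D R j p / det (A R))"
proof -
  have AR: "A R \<in> carrier_mat N N" by (rule Acar[OF R])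
  have adj: "adj_mat (A R) \<in> carrier_mat N N" by (rule adj_mat(1)[OF AR])
  define y where "y = (1 / det (A R)) \<cdot>\<^sub>v (adj_mat (A R) *\<^sub>v p)"
  have "A R *\<^sub>v y = (1 / det (A R)) \<cdot>\<^sub>v (A R *\<^sub>v (adj_mat (A R) *\<^sub>v p))"
    unfolding y_def using AR adj p by (simp add: mult_mat_vec)
  also have "A R *\<^sub>v (adj_mat (A R) *\<^sub>v p) = (A R * adj_mat (A R)) *\<^sub>v p"
    using AR adj p by simp
  also have "\<dots> = det (A R) \<cdot>\<^sub>v p" unfolding adj_mat(2)[OF AR]
    using p by (intro eq_vecI) (auto simp: scalar_prod_def if_distrib[of "(*) _"] if_distrib[of "\<lambda>x. x * _"] cong: if_cong)
  finally have 1: "A R *\<^sub>v y = p" using detnz[OF R] p by (auto simp: smult_smult_assoc)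
  have "y = vec N (\<lambda>j. D R j p / det (A R))"
    unfolding y_def using adj p R by (intro eq_vecI) (auto simp: D_adj)
  with 1 show ?thesis by simp
qed

lemma D_P: assumes "R \<in> Rs" "j < N" "p \<in> carrier_vec N"
  shows "D (P R j) j p = D R j p"
proof -
  have "replace_col (A (P R j)) p j = replace_col (A R) p j"
    using Acar[OF assms(1)] Acar[OF P_in[OF assms(1,2)]] P_col[OF assms(1,2)]
    by (intro eq_matI) (auto simp: replace_col_def)
  then show ?thesis unfolding D_def by simp
qed

lemma P_mult: assumes "R \<in> Rs" "j < N" "x \<in> carrier_vec N" "x $ j = 0"
  shows "A (P R j) *\<^sub>v x = A R *\<^sub>v x"
  using Acar[OF assms(1)] Acar[OF P_in[OF assms(1,2)]] P_col[OF assms(1,2)] assms(3,4)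
  by (intro eq_vecI) (auto simp: scalar_prod_def intro!: sum.cong, metis)


lemma transfer: assumes R: "R \<in> Rs" and J: "J < N" and p: "p \<in> carrier_vec N"
  and z: "D R J p = 0" and pos: "\<forall>j<N. j \<noteq> J \<longrightarrow> D R j p * det (A R) > 0"
  shows "\<forall>j<N. j \<noteq> J \<longrightarrow> D (P R J) j p * det (A (P R J)) > 0"
proof (intro allI impI)
  fix j assume j: "j < N" "j \<noteq> J"
  define x where "x = vec N (\<lambda>j. D R j p / det (A R))"
  have x: "x \<in> carrier_vec N" unfolding x_def by simp
  have px: "p = A R *\<^sub>v x" unfolding x_def by (rule D_repr[OF R p])
  have xJ: "x $ J = 0" unfolding x_def using J z by simp
  have px': "p = A (P R J) *\<^sub>v x" using P_mult[OF R J x xJ] px by simp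
  have R': "P R J \<in> Rs" by (rule P_in[OF R J])
  have "D (P R J) j p = x $ j * det (A (P R J))"
    using D_cramer[OF R' j(1) x] px' by simp
  moreover have "x $ j > 0"
  proof -
    have "D R j p * det (A R) > 0" using pos j by auto
    hence "D R j p / det (A R) > 0" by (simp add: zero_less_mult_iff zero_less_divide_iff)
    thus ?thesis unfolding x_def using j by simp
  qed
  moreover have "det (A (P R J)) \<noteq> 0" by (rule detnz[OF R'])
  ultimately show "D (P R J) j p * det (A (P R J)) > 0"
    by (simp add: mult.assoc) (simp add: zero_less_mult_iff, metis linorder_neq_iff)
qed

end

lemma sgn_trans1: "(a::real) * b > 0 \<Longrightarrow> b * c > 0 \<Longrightarrow> a * c > 0"
  by (auto simp: zero_less_mult_iff)
lemma sgn_trans2: "(a::real) * b > 0 \<Longrightarrow> b * c < 0 \<Longrightarrow> a * c < 0"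
  by (auto simp: zero_less_mult_iff mult_less_0_iff)

lemma pair_alg: fixes x a b c :: real
  assumes "x \<noteq> 0" "a \<noteq> 0" "b \<noteq> 0"
  shows "sgn a * c * (if 0 \<le> x * a then 1 else 0) + sgn b * (- c) * (if 0 \<le> x * b then 1 else 0)
    = c * (sgn a - sgn b) / 2"
  using assms by (cases "x > 0"; cases "a > 0"; cases "b > 0") (auto simp: zero_le_mult_iff)


context core begin

lemma segment:
  assumes u: "u \<in> carrier_vec N" and w: "w \<in> carrier_vec N" and gu: "gen u"
  and H2: "\<forall>R\<in>Rs. \<forall>j<N. D R j w \<noteq> 0"
  and H3: "\<forall>R\<in>Rs. \<forall>j1<N. \<forall>j2<N. j1 \<noteq> j2 \<longrightarrow> (D R j1 u \<noteq> 0 \<or> D R j2 u \<noteq> 0) \<longrightarrow>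
             D R j1 u * D R j2 w - D R j2 u * D R j1 w \<noteq> 0"
  shows "F u = F w"
proof -
  define \<gamma> where "\<gamma> t = (1 - t) \<cdot>\<^sub>v u + t \<cdot>\<^sub>v w" for t
  have \<gamma>c: "\<gamma> t \<in> carrier_vec N" for t unfolding \<gamma>_def using u w by auto
  have D\<gamma>: "D R j (\<gamma> t) = (1-t) * D R j u + t * D R j w" if "R \<in> Rs" "j < N" for R j t
    unfolding \<gamma>_def by (rule D_lin[OF that u w])
  have \<gamma>0: "\<gamma> 0 = u" unfolding \<gamma>_def using u w by (intro eq_vecI) auto
  have \<gamma>1: "\<gamma> 1 = w" unfolding \<gamma>_def using u w by (intro eq_vecI) auto
  have gw: "gen w" using H2 unfolding gen_def by auto
  have nz2: False if R: "R \<in> Rs" and j: "j1 < N" "j2 < N" "j1 \<noteq> j2" and t: "0 < t"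
    and z: "D R j1 (\<gamma> t) = 0" "D R j2 (\<gamma> t) = 0" for R j1 j2 t
  proof -
    define a1 where "a1 = D R j1 u" define a2 where "a2 = D R j2 u"
    define b1 where "b1 = D R j1 w" define b2 where "b2 = D R j2 w"
    have e1: "(1-t) * a1 + t * b1 = 0" using z D\<gamma>[OF R j(1)] unfolding a1_def b1_def by simp
    have e2: "(1-t) * a2 + t * b2 = 0" using z D\<gamma>[OF R j(2)] unfolding a2_def b2_def by simp
    have b1: "b1 \<noteq> 0" using H2 R j unfolding b1_def by auto
    show False
    proof (cases "a1 \<noteq> 0 \<or> a2 \<noteq> 0")
      case True
      hence ne: "a1 * b2 - a2 * b1 \<noteq> 0" using H3 R j unfolding a1_def a2_def b1_def b2_def by blast
      have "t * (a1 * b2 - a2 * b1) = a1 * (t * b2) - a2 * (t * b1)" by (simp add: algebra_simps)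
      also have "\<dots> = a1 * (- ((1-t) * a2)) - a2 * (- ((1-t) * a1))"
      proof -
        have tb1: "t * b1 = - ((1-t) * a1)" using e1 by linarith
        have tb2: "t * b2 = - ((1-t) * a2)" using e2 by linarith
        show ?thesis by (simp only: tb1 tb2)
      qed
      also have "\<dots> = 0" by (simp add: algebra_simps)
      finally show False using ne t by simp
    next
      case False
      then show False using e1 b1 t by simp
    qed
  qed
  define B where "B = {t\<in>{0..1}. \<not> gen (\<gamma> t)}"
  have finB: "finite B"
  proof (rule finite_subset)
    show "B \<subseteq> (\<Union>R\<in>Rs. \<Union>j\<in>{..<N}. {D R j u / (D R j u - D R j w)})"
    proof
      fix t assume "t \<in> B"
      then obtain R j where R: "R \<in> Rs" and j: "j < N" and z: "D R j (\<gamma> t) = 0"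
        unfolding B_def gen_def by auto
      define a where "a = D R j u" define b where "b = D R j w"
      have e: "(1-t) * a + t * b = 0" using z D\<gamma>[OF R j] unfolding a_def b_def by simp
      have b: "b \<noteq> 0" using H2 R j unfolding b_def by auto
      have ab: "a - b \<noteq> 0"
      proof
        assume "a - b = 0" hence "a = b" by simp
        with e have "b = 0" by (simp add: algebra_simps)
        with b show False by simp
      qed
      have "t * (a - b) = a" using e by (simp add: algebra_simps)
      hence "t = a / (a - b)" using ab by (simp add: field_simps)
      then show "t \<in> (\<Union>R\<in>Rs. \<Union>j\<in>{..<N}. {D R j u / (D R j u - D R j w)})"
        using R j unfolding a_def b_def by auto
    qed
    show "finite (\<Union>R\<in>Rs. \<Union>j\<in>{..<N}. {D R j u / (D R j u - D R j w)})" using fin by auto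
  qed
  have B0: "0 \<notin> B" using gu \<gamma>0 unfolding B_def by auto
  have B1: "1 \<notin> B" using gw \<gamma>1 unfolding B_def by auto
  have loc: "\<forall>t0\<in>{0..1}. \<exists>c. \<forall>\<^sub>F t in nhds t0. t \<in> {0..1} - B \<longrightarrow> F (\<gamma> t) = c"
  proof
    fix t0 :: real assume t0: "t0 \<in> {0..1}"
    define p0 where "p0 = \<gamma> t0"
    have p0c: "p0 \<in> carrier_vec N" unfolding p0_def by (rule \<gamma>c)
    have uniq: "J = J'" if R: "R \<in> Rs" and iR: "ind R p0" and J: "J < N" "J' < N"
      and z: "D R J p0 = 0" "D R J' p0 = 0" for R J J'
    proof (cases "t0 = 0")
      case True
      then have "p0 = u" unfolding p0_def using \<gamma>0 by simp
      with gu R J z iR show ?thesis unfolding gen_def by auto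
    next
      case False
      with t0 have "0 < t0" by auto
      then show ?thesis using nz2[OF R J] z unfolding p0_def by blast
    qed
    define Z where "Z = {R\<in>Rs. \<exists>J<N. D R J p0 = 0 \<and> ind R p0}"
    define J where "J R = (SOME J. J < N \<and> D R J p0 = 0)" for R
    define \<sigma> where "\<sigma> R = P R (J R)" for R
    have JZ: "J R < N \<and> D R (J R) p0 = 0" if "R \<in> Z" for R
      unfolding J_def by (rule someI_ex) (use that Z_def in auto)
    have Zpos: "\<forall>j<N. j \<noteq> J R \<longrightarrow> D R j p0 * det (A R) > 0" if "R \<in> Z" for R
    proof (intro allI impI)
      fix j assume j: "j < N" "j \<noteq> J R"
      have R: "R \<in> Rs" and iR: "ind R p0" using that unfolding Z_def by auto
      have "D R j p0 \<noteq> 0" using uniq[OF R iR j(1), of "J R"] JZ[OF that] j by auto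
      moreover have "0 \<le> D R j p0 * det (A R)" using iR j unfolding ind_def by auto
      moreover have "det (A R) \<noteq> 0" by (rule detnz[OF R])
      ultimately show "D R j p0 * det (A R) > 0" by (simp add: order_le_less)
    qed
    have \<sigma>Z: "\<sigma> R \<in> Z \<and> J (\<sigma> R) = J R \<and> \<sigma> (\<sigma> R) = R"
        "\<forall>j<N. j \<noteq> J R \<longrightarrow> D (\<sigma> R) j p0 * det (A (\<sigma> R)) > 0" if RZ: "R \<in> Z" for R
    proof -
      have R: "R \<in> Rs" using RZ unfolding Z_def by auto
      note JR = JZ[OF RZ]
      have R': "\<sigma> R \<in> Rs" unfolding \<sigma>_def using P_in R JR by auto
      have z': "D (\<sigma> R) (J R) p0 = 0" unfolding \<sigma>_def using D_P[OF R _ p0c] JR by auto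
      show pos': "\<forall>j<N. j \<noteq> J R \<longrightarrow> D (\<sigma> R) j p0 * det (A (\<sigma> R)) > 0"
        unfolding \<sigma>_def by (rule transfer[OF R _ p0c]) (use JR Zpos[OF RZ] in auto)
      have ind': "ind (\<sigma> R) p0" unfolding ind_def
      proof (intro allI impI)
        fix j assume "j < N"
        then show "0 \<le> D (\<sigma> R) j p0 * det (A (\<sigma> R))" using pos' z' by (cases "j = J R") auto
      qed
      have Z': "\<sigma> R \<in> Z" unfolding Z_def using R' ind' z' JR by auto
      have "J (\<sigma> R) = J R" using uniq[OF R' ind'] JZ[OF Z'] JR z' by blast
      moreover have "\<sigma> (\<sigma> R) = R" using calculation unfolding \<sigma>_def using P_inv R JR by auto
      ultimately show "\<sigma> R \<in> Z \<and> J (\<sigma> R) = J R \<and> \<sigma> (\<sigma> R) = R" using Z' by auto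
    qed
    have bij: "bij_betw \<sigma> Z Z" by (rule bij_betw_byWitness[of Z \<sigma> \<sigma>]) (use \<sigma>Z in auto)
    define K where "K R = cs R * (sgn (det (A R)) - sgn (det (A (\<sigma> R)))) / 2" for R
    define c where "c = (\<Sum>R\<in>Rs - Z. h R p0) + (\<Sum>R\<in>Z. K R) / 2"
    have E1: "\<forall>\<^sub>F t in nhds t0. D R j p0 \<noteq> 0 \<longrightarrow> D R j (\<gamma> t) * D R j p0 > 0"
      if R: "R \<in> Rs" and j: "j < N" for R j
    proof (cases "D R j p0 = 0")
      case True then show ?thesis by simp
    next
      case False
      have lim: "((\<lambda>t. ((1-t) * D R j u + t * D R j w) * D R j p0) \<longlongrightarrow>
          ((1-t0) * D R j u + t0 * D R j w) * D R j p0) (nhds t0)"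
        by (intro tendsto_intros filterlim_ident)
      have "((1-t0) * D R j u + t0 * D R j w) * D R j p0 > 0"
        using False D\<gamma>[OF R j, of t0] unfolding p0_def by (simp add: zero_less_mult_iff linorder_neq_iff) blast
      from order_tendstoD(1)[OF lim this]
      show ?thesis by eventually_elim (use D\<gamma>[OF R j] in auto)
    qed
    have E: "\<forall>\<^sub>F t in nhds t0. \<forall>R\<in>Rs. \<forall>j\<in>{..<N}. D R j p0 \<noteq> 0 \<longrightarrow> D R j (\<gamma> t) * D R j p0 > 0"
      using fin E1 by (intro eventually_ball_finite ballI) auto
    show "\<exists>c. \<forall>\<^sub>F t in nhds t0. t \<in> {0..1} - B \<longrightarrow> F (\<gamma> t) = c"
    proof (intro exI[of _ c], use E in eventually_elim, intro impI)
      fix t assume Et: "\<forall>R\<in>Rs. \<forall>j\<in>{..<N}. D R j p0 \<noteq> 0 \<longrightarrow> D R j (\<gamma> t) * D R j p0 > 0"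
        and tB: "t \<in> {0..1} - B"
      define q where "q = \<gamma> t"
      have gq: "gen q" using tB unfolding q_def B_def by auto
      have a: "h R q = h R p0" if R: "R \<in> Rs - Z" for R
      proof -
        have RR: "R \<in> Rs" using R by auto
        have "ind R q = ind R p0"
        proof
          assume iR: "ind R p0"
          show "ind R q" unfolding ind_def
          proof (intro allI impI)
            fix j assume j: "j < N"
            have nz: "D R j p0 \<noteq> 0" using R iR j unfolding Z_def by auto
            have "D R j p0 * det (A R) > 0" using iR j nz detnz[OF RR] unfolding ind_def
              by (simp add: order_le_less) blast
            with Et RR j nz show "0 \<le> D R j q * det (A R)" unfolding q_def
              using sgn_trans1 by (meson lessThan_iff less_imp_le)
          qed
        next
          assume iq: "ind R q"
          show "ind R p0"
          proof (rule ccontr)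
            assume "\<not> ind R p0"
            then obtain j where j: "j < N" and neg: "D R j p0 * det (A R) < 0"
              unfolding ind_def by (auto simp: not_le)
            have nz: "D R j p0 \<noteq> 0" using neg by auto
            have "D R j q * D R j p0 > 0" using Et RR j nz unfolding q_def by auto
            hence "D R j q * det (A R) < 0" using neg by (rule sgn_trans2)
            with iq j show False unfolding ind_def by (auto simp: not_le[symmetric])
          qed
        qed
        then show ?thesis unfolding h_def by simp
      qed
      have b: "h R q + h (\<sigma> R) q = K R" if RZ: "R \<in> Z" for R
      proof -
        have R: "R \<in> Rs" using RZ unfolding Z_def by auto
        note JR = JZ[OF RZ]
        have R': "\<sigma> R \<in> Rs" using \<sigma>Z(1)[OF RZ] unfolding Z_def by auto
        define x where "x = D R (J R) q"
        have x': "D (\<sigma> R) (J R) q = x" unfolding x_def \<sigma>_def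
          using D_P[OF R _] JR \<gamma>c q_def by auto
        have posq: "\<forall>j<N. j \<noteq> J R \<longrightarrow> D R j q * det (A R) > 0"
        proof (intro allI impI)
          fix j assume j: "j < N" "j \<noteq> J R"
          have p: "D R j p0 * det (A R) > 0" using Zpos[OF RZ] j by auto
          hence "D R j p0 \<noteq> 0" by auto
          with Et R j have "D R j q * D R j p0 > 0" unfolding q_def by auto
          then show "D R j q * det (A R) > 0" using p by (rule sgn_trans1)
        qed
        have posq': "\<forall>j<N. j \<noteq> J R \<longrightarrow> D (\<sigma> R) j q * det (A (\<sigma> R)) > 0"
        proof (intro allI impI)
          fix j assume j: "j < N" "j \<noteq> J R"
          have p: "D (\<sigma> R) j p0 * det (A (\<sigma> R)) > 0" using \<sigma>Z(2)[OF RZ] j by auto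
          hence "D (\<sigma> R) j p0 \<noteq> 0" by auto
          with Et R' j have "D (\<sigma> R) j q * D (\<sigma> R) j p0 > 0" unfolding q_def by auto
          then show "D (\<sigma> R) j q * det (A (\<sigma> R)) > 0" using p by (rule sgn_trans1)
        qed
        have x0: "x \<noteq> 0"
        proof
          assume x0: "x = 0"
          have "ind R q" unfolding ind_def
          proof (intro allI impI)
            fix j assume "j < N"
            then show "0 \<le> D R j q * det (A R)" using posq x0 x_def by (cases "j = J R") auto
          qed
          with gq R JR x0 show False unfolding gen_def x_def by auto
        qed
        have i1: "ind R q \<longleftrightarrow> 0 \<le> x * det (A R)"
          unfolding ind_def using posq JR x_def by (metis less_imp_le)
        have i2: "ind (\<sigma> R) q \<longleftrightarrow> 0 \<le> x * det (A (\<sigma> R))"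
          unfolding ind_def using posq' JR x' by (metis less_imp_le)
        have cs': "cs (\<sigma> R) = - cs R" unfolding \<sigma>_def using P_cs R JR by auto
        show ?thesis unfolding h_def i1 i2 cs' K_def
          by (rule pair_alg[OF x0 detnz[OF R] detnz[OF R']])
      qed
      have "F q = (\<Sum>R\<in>Rs - Z. h R q) + (\<Sum>R\<in>Z. h R q)"
        unfolding F_def using fin by (subst sum.subset_diff[of Z]) (auto simp: Z_def)
      also have "(\<Sum>R\<in>Rs - Z. h R q) = (\<Sum>R\<in>Rs - Z. h R p0)" using a by (rule sum.cong[OF refl])
      also have "(\<Sum>R\<in>Z. h R q) = (\<Sum>R\<in>Z. K R) / 2"
      proof -
        have "(\<Sum>R\<in>Z. h (\<sigma> R) q) = (\<Sum>R\<in>Z. h R q)"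
          by (rule sum.reindex_bij_betw[OF bij])
        moreover have "(\<Sum>R\<in>Z. h R q + h (\<sigma> R) q) = (\<Sum>R\<in>Z. K R)" using b by (rule sum.cong[OF refl])
        ultimately show ?thesis by (simp add: sum.distrib)
      qed
      finally show "F (\<gamma> t) = c" unfolding c_def q_def .
    qed
  qed
  have "F (\<gamma> 0) = F (\<gamma> 1)" by (rule oneD[OF finB B0 B1 loc])
  then show ?thesis using \<gamma>0 \<gamma>1 by simp
qed

end


lemma avoid:
  fixes Ls :: "real vec set"
  assumes fin: "finite Ls" and car: "Ls \<subseteq> carrier_vec N" and nz: "0\<^sub>v N \<notin> Ls"
  shows "\<exists>w\<in>carrier_vec N. \<forall>l\<in>Ls. l \<bullet> w \<noteq> 0"
proof -
  define mc where "mc x = vec N (\<lambda>i. x ^ i)" for x :: real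
  define pl where "pl l = (\<Sum>i<N. monom (l $ i) i)" for l :: "real vec"
  have ev: "l \<bullet> mc x = poly (pl l) x" if "l \<in> Ls" for l x
    using car that unfolding pl_def mc_def scalar_prod_def
    by (auto simp: poly_sum poly_monom intro!: sum.cong)
  have plnz: "pl l \<noteq> 0" if "l \<in> Ls" for l
  proof
    assume 0: "pl l = 0"
    have "l = 0\<^sub>v N"
    proof (rule eq_vecI)
      fix i assume i: "i < dim_vec (0\<^sub>v N :: real vec)"
      have "coeff (pl l) i = l $ i" unfolding pl_def using i
        by (auto simp: coeff_sum coeff_monom sum.delta)
      with 0 i show "l $ i = 0\<^sub>v N $ i" by simp
    qed (use car that in auto)
    with nz that show False by simp
  qed
  have "finite (\<Union>l\<in>Ls. {x. poly (pl l) x = 0})"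
    using fin plnz by (auto intro!: poly_roots_finite)
  then obtain x where x: "x \<notin> (\<Union>l\<in>Ls. {x. poly (pl l) x = 0})"
    using ex_new_if_finite[OF infinite_UNIV_char_0] by blast
  show ?thesis
    by (rule bexI[of _ "mc x"]) (use x ev in \<open>auto simp: mc_def\<close>)
qed

lemma lin_sp: assumes "x \<in> carrier_vec N" "y \<in> carrier_vec N" "w \<in> carrier_vec N"
  shows "(a \<cdot>\<^sub>v x + b \<cdot>\<^sub>v y) \<bullet> w = a * (x \<bullet> w) + b * (y \<bullet> w)"
  using assms by (simp add: add_scalar_prod_distrib[of _ N])

context core begin

lemma adj_unit: assumes "R \<in> Rs" "j < N" "k < N"
  shows "row (adj_mat (A R)) j \<bullet> (A R *\<^sub>v unit_vec N k) = (if j = k then det (A R) else 0)"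
proof -
  have "row (adj_mat (A R)) j \<bullet> (A R *\<^sub>v unit_vec N k) = D R j (A R *\<^sub>v unit_vec N k)"
    using assms Acar[OF assms(1)] by (simp add: D_adj)
  also have "\<dots> = unit_vec N k $ j * det (A R)" using assms by (simp add: D_cramer)
  finally show ?thesis using assms by simp
qed

theorem main: assumes u: "u \<in> carrier_vec N" and v: "v \<in> carrier_vec N"
  and gu: "gen u" and gv: "gen v"
  shows "F u = F v"
proof -
  define r where "r R j = row (adj_mat (A R)) j" for R j
  have rc: "r R j \<in> carrier_vec N" if "R \<in> Rs" "j < N" for R j
    unfolding r_def by (rule adjrow_car[OF that])
  define cmb where "cmb x R j1 j2 = D R j1 x \<cdot>\<^sub>v r R j2 + (- D R j2 x) \<cdot>\<^sub>v r R j1" for x R j1 j2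
  define L2 where "L2 x = (\<lambda>(R,j1,j2). cmb x R j1 j2) ` {(R,j1,j2). R \<in> Rs \<and> j1 < N \<and> j2 < N \<and> j1 \<noteq> j2
      \<and> (D R j1 x \<noteq> 0 \<or> D R j2 x \<noteq> 0)}" for x
  define L1 where "L1 = (\<lambda>(R,j). r R j) ` (Rs \<times> {..<N})"
  define Ls where "Ls = L1 \<union> L2 u \<union> L2 v"
  have finL2: "finite (L2 x)" for x
  proof -
    have "{(R,j1,j2). R \<in> Rs \<and> j1 < N \<and> j2 < N \<and> j1 \<noteq> j2 \<and> (D R j1 x \<noteq> 0 \<or> D R j2 x \<noteq> 0)}
       \<subseteq> Rs \<times> {..<N} \<times> {..<N}" by auto
    from finite_subset[OF this] show ?thesis unfolding L2_def using fin by auto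
  qed
  have finLs: "finite Ls" unfolding Ls_def L1_def using finL2 fin by auto
  have carLs: "Ls \<subseteq> carrier_vec N" unfolding Ls_def L1_def L2_def cmb_def using rc by auto
  have ev: "(if j = k then det (A R) else 0) = r R j \<bullet> (A R *\<^sub>v unit_vec N k)"
    if "R \<in> Rs" "j < N" "k < N" for R j k
    unfolding r_def using adj_unit[OF that] by simp
  have nzLs: "0\<^sub>v N \<notin> Ls"
  proof
    assume "0\<^sub>v N \<in> Ls"
    then consider (a) R j where "R \<in> Rs" "j < N" "r R j = 0\<^sub>v N"
      | (b) x R j1 j2 where "R \<in> Rs" "j1 < N" "j2 < N" "j1 \<noteq> j2" "D R j1 x \<noteq> 0 \<or> D R j2 x \<noteq> 0"
          "cmb x R j1 j2 = 0\<^sub>v N"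
      unfolding Ls_def L1_def L2_def by (auto; metis)
    then show False
    proof cases
      case a
      have "det (A R) = r R j \<bullet> (A R *\<^sub>v unit_vec N j)" using ev[OF a(1,2,2)] by simp
      also have "\<dots> = 0" using a Acar[of R] by simp
      finally show False using detnz[OF a(1)] by simp
    next
      case b
      have Au: "A R *\<^sub>v unit_vec N k \<in> carrier_vec N" for k using Acar[OF b(1)] by auto
      have val: "cmb x R j1 j2 \<bullet> (A R *\<^sub>v unit_vec N k) =
          D R j1 x * (if j2 = k then det (A R) else 0) - D R j2 x * (if j1 = k then det (A R) else 0)"
        if "k < N" for k
        unfolding cmb_def using lin_sp[OF rc[OF b(1,3)] rc[OF b(1,2)] Au] ev[OF b(1,3) that] ev[OF b(1,2) that]
        by simp
      have z: "cmb x R j1 j2 \<bullet> (A R *\<^sub>v unit_vec N k) = 0" for k using b(6) Au[of k] by simp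
      show False
      proof (cases "D R j1 x \<noteq> 0")
        case True
        from val[OF b(3)] z[of j2] b(4) have "D R j1 x * det (A R) = 0" by simp
        with True detnz[OF b(1)] show False by simp
      next
        case False
        with b(5) have "D R j2 x \<noteq> 0" by simp
        moreover from val[OF b(2)] z[of j1] b(4) have "D R j2 x * det (A R) = 0" by simp
        ultimately show False using detnz[OF b(1)] by simp
      qed
    qed
  qed
  obtain w where w: "w \<in> carrier_vec N" and wL: "\<forall>l\<in>Ls. l \<bullet> w \<noteq> 0"
    using avoid[OF finLs carLs nzLs] by blast
  have Dw: "D R j w = r R j \<bullet> w" if "R \<in> Rs" "j < N" for R j
    unfolding r_def using D_adj[OF that w] .
  have H2: "\<forall>R\<in>Rs. \<forall>j<N. D R j w \<noteq> 0"
    using wL Dw unfolding Ls_def L1_def by auto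
  have H3: "\<forall>R\<in>Rs. \<forall>j1<N. \<forall>j2<N. j1 \<noteq> j2 \<longrightarrow> (D R j1 x \<noteq> 0 \<or> D R j2 x \<noteq> 0) \<longrightarrow>
             D R j1 x * D R j2 w - D R j2 x * D R j1 w \<noteq> 0" if x: "x = u \<or> x = v" for x
  proof (intro ballI allI impI)
    fix R j1 j2 assume R: "R \<in> Rs" and j: "j1 < N" "j2 < N" "j1 \<noteq> j2" "D R j1 x \<noteq> 0 \<or> D R j2 x \<noteq> 0"
    have "cmb x R j1 j2 \<in> L2 x" unfolding L2_def using R j
      by (intro image_eqI[of _ _ "(R,j1,j2)"]) auto
    hence "cmb x R j1 j2 \<in> Ls" unfolding Ls_def using x by auto
    hence "cmb x R j1 j2 \<bullet> w \<noteq> 0" using wL by auto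
    moreover have "cmb x R j1 j2 \<bullet> w = D R j1 x * D R j2 w - D R j2 x * D R j1 w"
      unfolding cmb_def using lin_sp[OF rc[OF R j(2)] rc[OF R j(1)] w] Dw[OF R j(1)] Dw[OF R j(2)] by simp
    ultimately show "D R j1 x * D R j2 w - D R j2 x * D R j1 w \<noteq> 0" by simp
  qed
  have "F u = F w" by (rule segment[OF u w gu H2 H3]) simp
  moreover have "F v = F w" by (rule segment[OF v w gv H2 H3]) simp
  ultimately show ?thesis by simp
qed

end


locale bmzctx =
  fixes d r :: nat and w c :: "nat \<Rightarrow> real vec"
  assumes r2: "2 \<le> r" and reg: "regular_simplex_centered r w" and bm: "bmz d r c"
    and sgp: "suff_general_position d r w c"
begin

abbreviation "NN \<equiv> bmzN d r"
abbreviation "z \<equiv> zpt d r c"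
abbreviation "G \<equiv> groundC d r c"

lemma c_car: "j \<in> {1..NN+1} \<Longrightarrow> c j \<in> carrier_vec d"
  using bm unfolding bmz_def by auto
lemma c_inj: "inj_on c {1..NN+1}"
  using bm unfolding bmz_def by auto
lemma c_eq_iff: "j \<in> {1..NN+1} \<Longrightarrow> j' \<in> {1..NN+1} \<Longrightarrow> c j = c j' \<longleftrightarrow> j = j'"
  using c_inj unfolding inj_on_def by blast
lemma w_car: "i \<in> {1..r} \<Longrightarrow> w i \<in> carrier_vec (r-1)"
  using reg unfolding regular_simplex_centered_def by auto
lemma z_eq: "z = c (NN+1)" unfolding zpt_def ..
lemma G_eq: "G = c ` {1..NN+1}" unfolding groundC_def ..
lemma fin_G: "finite G" unfolding G_eq by simp
lemma z_G: "z \<in> G" unfolding G_eq z_eq by auto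

lemma Rset_fin: "finite (Rset d r c)"
proof (rule finite_subset)
  show "Rset d r c \<subseteq> {f. \<forall>x. (x \<in> {1..r} \<longrightarrow> f x \<in> Pow G) \<and> (x \<notin> {1..r} \<longrightarrow> f x = {})}"
    unfolding Rset_def maximal_rainbow_def rainbow_def by auto
  show "finite {f. \<forall>x. (x \<in> {1..r} \<longrightarrow> f x \<in> Pow G) \<and> (x \<notin> {1..r} \<longrightarrow> f x = {})}"
    by (rule finite_set_of_finite_funs) (use fin_G in auto)
qed

lemma R_out: "R \<in> Rset d r c \<Longrightarrow> i \<notin> {1..r} \<Longrightarrow> R i = {}"
  unfolding Rset_def maximal_rainbow_def rainbow_def by auto
lemma R_in: "R \<in> Rset d r c \<Longrightarrow> p \<in> R i \<Longrightarrow> i \<in> {1..r}"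
  using R_out by fastforce
lemma R_sub: "R \<in> Rset d r c \<Longrightarrow> R i \<subseteq> G"
  unfolding Rset_def maximal_rainbow_def rainbow_def by (cases "i \<in> {1..r}") auto
lemma R_disj: "R \<in> Rset d r c \<Longrightarrow> i \<noteq> i' \<Longrightarrow> p \<in> R i \<Longrightarrow> p \<notin> R i'"
  using R_in[of R p i] R_in[of R p i']
  unfolding Rset_def maximal_rainbow_def rainbow_def by blast
lemma R_cov: "R \<in> Rset d r c \<Longrightarrow> p \<in> G \<Longrightarrow> \<exists>i\<in>{1..r}. p \<in> R i"
  unfolding Rset_def maximal_rainbow_def by auto
lemma z_in: "R \<in> Rset d r c \<Longrightarrow> z \<in> R r"
  unfolding Rset_def by auto
lemma fin_block: "finite (block d r c k)"
  unfolding block_def by auto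
lemma R_card: "R \<in> Rset d r c \<Longrightarrow> k \<in> {1..d+2} \<Longrightarrow> p \<in> R i \<Longrightarrow> q \<in> R i
   \<Longrightarrow> p \<in> block d r c k \<Longrightarrow> q \<in> block d r c k \<Longrightarrow> p = q"
proof -
  assume R: "R \<in> Rset d r c" and k: "k \<in> {1..d+2}" and pq: "p \<in> R i" "q \<in> R i"
    "p \<in> block d r c k" "q \<in> block d r c k"
  have i: "i \<in> {1..r}" using R_in[OF R pq(1)] .
  have "card (R i \<inter> block d r c k) \<le> 1" using R i k
    unfolding Rset_def maximal_rainbow_def rainbow_def by auto
  moreover have "finite (R i \<inter> block d r c k)" using fin_block by auto
  ultimately show "p = q" using pq card_le_Suc0_iff_eq by fastforce
qed

lemma cls_eq: "R \<in> Rset d r c \<Longrightarrow> p \<in> R i \<Longrightarrow> cls r R p = i"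
  unfolding cls_def
  by (rule the_equality) (use R_in R_disj in blast)+

lemma cls_mem: "R \<in> Rset d r c \<Longrightarrow> p \<in> G \<Longrightarrow> cls r R p \<in> {1..r} \<and> p \<in> R (cls r R p)"
  using R_cov[of R p] cls_eq[of R p] by auto

end


context bmzctx begin

definition rowv where "rowv R k = phi w (cls r R (c (k+1))) (c (k+1))"
definition AA where "AA R = mat NN NN (\<lambda>(i,k). rowv R k $ i)"

lemma r1: "r - 1 > 0" using r2 by simp

lemma phi_car: "x \<in> carrier_vec d \<Longrightarrow> i \<in> {1..r} \<Longrightarrow> phi w i x \<in> carrier_vec NN"
  using w_car[of i] unfolding phi_def tensor_def hom1_def bmzN_def by auto

lemma phi_idx: assumes x: "x \<in> carrier_vec d" and i: "i \<in> {1..r}" and a: "a \<le> d" and m: "m < r - 1"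
  shows "phi w i x $ (a * (r-1) + m) = (if a < d then x $ a else 1) * w i $ m"
proof -
  have wi: "dim_vec (w i) = r - 1" using w_car[OF i] by auto
  have lt: "a * (r-1) + m < (d+1) * (r-1)"
  proof -
    have "a * (r-1) + m < a * (r-1) + (r-1)" using m by simp
    also have "\<dots> = (a+1) * (r-1)" by simp
    also have "\<dots> \<le> (d+1) * (r-1)" using a by (intro mult_right_mono) auto
    finally show ?thesis .
  qed
  have dv: "(a * (r - Suc 0) + m) div (r - Suc 0) = a" using m r1 by simp
  have md: "m mod (r - Suc 0) = m" using m r1 by simp
  have dv': "(d * (r - Suc 0) + m) div (r - Suc 0) = d" using m r1 by simp
  show ?thesis unfolding phi_def tensor_def hom1_def using x lt a
    by (auto simp add: wi dv md dv')
qed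

lemma rowv_car: "R \<in> Rset d r c \<Longrightarrow> k < NN \<Longrightarrow> rowv R k \<in> carrier_vec NN"
  unfolding rowv_def using cls_mem[of R "c (k+1)"] c_car[of "k+1"] G_eq
  by (intro phi_car) auto

lemma Phi_minus: assumes R: "R \<in> Rset d r c" and X: "z \<in> X"
  shows "Phi r w (\<lambda>i. R i - X) = rowv R ` {k. k < NN \<and> c (k+1) \<notin> X}"
proof
  show "Phi r w (\<lambda>i. R i - X) \<subseteq> rowv R ` {k. k < NN \<and> c (k+1) \<notin> X}"
  proof
    fix v assume "v \<in> Phi r w (\<lambda>i. R i - X)"
    then obtain i p where i: "i \<in> {1..r}" and p: "p \<in> R i" "p \<notin> X" and v: "v = phi w i p"
      unfolding Phi_def by auto
    have "p \<in> G" using R_sub[OF R] p by auto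
    then obtain j where j: "j \<in> {1..NN+1}" and pj: "p = c j" unfolding G_eq by auto
    have "j \<noteq> NN + 1" using p X pj z_eq by auto
    with j have k: "j - 1 < NN" "j - 1 + 1 = j" by auto
    have "cls r R p = i" by (rule cls_eq[OF R p(1)])
    then have "v = rowv R (j-1)" unfolding rowv_def v using k pj by simp
    then show "v \<in> rowv R ` {k. k < NN \<and> c (k+1) \<notin> X}" using k pj p by auto
  qed
next
  show "rowv R ` {k. k < NN \<and> c (k+1) \<notin> X} \<subseteq> Phi r w (\<lambda>i. R i - X)"
  proof
    fix v assume "v \<in> rowv R ` {k. k < NN \<and> c (k+1) \<notin> X}"
    then obtain k where k: "k < NN" "c (k+1) \<notin> X" and v: "v = rowv R k" by auto
    have "c (k+1) \<in> G" unfolding G_eq using k by auto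
    from cls_mem[OF R this] have "cls r R (c (k+1)) \<in> {1..r}" "c (k+1) \<in> R (cls r R (c (k+1)))"
      by auto
    then show "v \<in> Phi r w (\<lambda>i. R i - X)" unfolding Phi_def v rowv_def using k by auto
  qed
qed

lemma Phi_rem_z: "R \<in> Rset d r c \<Longrightarrow> Phi r w (rem R z) = rowv R ` {..<NN}"
proof -
  assume R: "R \<in> Rset d r c"
  have "{k. k < NN \<and> c (k+1) \<notin> {z}} = {..<NN}"
    using c_eq_iff[of _ "NN+1"] z_eq by auto
  then show ?thesis using Phi_minus[OF R, of "{z}"] unfolding rem_def by simp
qed

lemma Phi_ridge: "R \<in> Rset d r c \<Longrightarrow> j < NN \<Longrightarrow>
   Phi r w (rem (rem R z) (c (j+1))) = rowv R ` ({..<NN} - {j})"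
proof -
  assume R: "R \<in> Rset d r c" and j: "j < NN"
  have "{k. k < NN \<and> c (k+1) \<notin> {z, c (j+1)}} = {..<NN} - {j}"
    using c_eq_iff[of _ "NN+1"] c_eq_iff[of _ "j+1"] z_eq j by auto
  moreover have "rem (rem R z) (c (j+1)) = (\<lambda>i. R i - {z, c (j+1)})"
    unfolding rem_def by auto
  ultimately show ?thesis using Phi_minus[OF R, of "{z, c (j+1)}"] by simp
qed

lemma aff0: "R \<in> Rset d r c \<Longrightarrow> 0\<^sub>v NN \<notin> aff_hull NN (rowv R ` {..<NN})"
  using sgp z_G Phi_rem_z unfolding suff_general_position_def by metis

lemma affind: "R \<in> Rset d r c \<Longrightarrow> aff_indep NN (rowv R ` {..<NN})"
  using sgp Phi_rem_z unfolding suff_general_position_def by metis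

lemma rowv_nz: assumes R: "R \<in> Rset d r c" and k: "k < NN" shows "rowv R k \<noteq> 0\<^sub>v NN"
proof
  assume 0: "rowv R k = 0\<^sub>v NN"
  define S where "S = rowv R ` {..<NN}"
  have fS: "finite S" unfolding S_def by auto
  have 0: "0\<^sub>v NN \<in> S" unfolding S_def using 0 k by force
  define l :: "real vec \<Rightarrow> real" where "l v = (if v = 0\<^sub>v NN then 1 else 0)" for v
  have "sum l S = 1" unfolding l_def using fS 0 by (simp add: sum.delta')
  moreover have "lincomb NN l S = 0\<^sub>v NN" unfolding lincomb_def l_def
    by (intro eq_vecI) (auto simp: if_distrib[of "\<lambda>x. x * _"] cong: if_cong)
  ultimately have "0\<^sub>v NN \<in> aff_hull NN S" unfolding aff_hull_def by force
  with aff0[OF R] show False unfolding S_def by simp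
qed

lemma rowv_inj: assumes R: "R \<in> Rset d r c" shows "inj_on (rowv R) {..<NN}"
proof
  fix k1 k2 assume k: "k1 \<in> {..<NN}" "k2 \<in> {..<NN}" and eq: "rowv R k1 = rowv R k2"
  define x1 where "x1 = c (k1+1)" define x2 where "x2 = c (k2+1)"
  define i1 where "i1 = cls r R x1" define i2 where "i2 = cls r R x2"
  have x1: "x1 \<in> carrier_vec d" "x1 \<in> G" unfolding x1_def G_eq using k c_car by auto
  have x2: "x2 \<in> carrier_vec d" "x2 \<in> G" unfolding x2_def G_eq using k c_car by auto
  have i1: "i1 \<in> {1..r}" unfolding i1_def using cls_mem[OF R x1(2)] by auto
  have i2: "i2 \<in> {1..r}" unfolding i2_def using cls_mem[OF R x2(2)] by auto
  have eq': "phi w i1 x1 = phi w i2 x2" using eq unfolding rowv_def x1_def x2_def i1_def i2_def .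
  have ww: "w i1 = w i2"
  proof (rule eq_vecI)
    fix m assume "m < dim_vec (w i2)"
    hence m: "m < r - 1" using w_car[OF i2] by auto
    show "w i1 $ m = w i2 $ m"
      using arg_cong[OF eq', of "\<lambda>v. v $ (d * (r-1) + m)"] phi_idx[OF x1(1) i1 _ m, of d]
        phi_idx[OF x2(1) i2 _ m, of d] by simp
  qed (use w_car[OF i1] w_car[OF i2] in auto)
  have ii: "i1 = i2"
  proof (rule ccontr)
    assume ne: "i1 \<noteq> i2"
    from reg obtain s where s: "s > 0" "\<forall>i\<in>{1..r}. \<forall>j\<in>{1..r}. i \<noteq> j \<longrightarrow> sqdist (w i) (w j) = s"
      unfolding regular_simplex_centered_def by auto
    have "sqdist (w i1) (w i2) = s" using s i1 i2 ne by auto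
    moreover have "sqdist (w i1) (w i2) = 0" unfolding sqdist_def ww by simp
    ultimately show False using s by simp
  qed
  have "w i1 \<noteq> 0\<^sub>v (r-1)"
  proof
    assume w0: "w i1 = 0\<^sub>v (r-1)"
    have "rowv R k1 = 0\<^sub>v NN"
    proof (rule eq_vecI)
      fix n assume "n < dim_vec (0\<^sub>v NN :: real vec)"
      hence n: "n < NN" by simp
      have "rowv R k1 = phi w i1 x1" unfolding rowv_def x1_def i1_def ..
      also have "phi w i1 x1 $ n = hom1 x1 $ (n div (r-1)) * w i1 $ (n mod (r-1))"
        using n phi_car[OF x1(1) i1] w_car[OF i1] unfolding phi_def tensor_def by auto
      also have "\<dots> = 0" using w0 r1 by simp
      finally show "rowv R k1 $ n = 0\<^sub>v NN $ n" using n by simp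
    qed (use rowv_car[OF R] k in auto)
    with rowv_nz[OF R] k show False by auto
  qed
  then obtain m where m: "m < r - 1" "w i1 $ m \<noteq> 0" using w_car[OF i1]
    by (metis carrier_vecD eq_vecI index_zero_vec(1) index_zero_vec(2))
  have "x1 = x2"
  proof (rule eq_vecI)
    fix a assume "a < dim_vec x2"
    hence a: "a < d" using x2 by auto
    have "x1 $ a * w i1 $ m = x2 $ a * w i1 $ m"
      using arg_cong[OF eq', of "\<lambda>v. v $ (a * (r-1) + m)"] phi_idx[OF x1(1) i1 _ m(1), of a]
        phi_idx[OF x2(1) i2 _ m(1), of a] a ii by simp
    with m show "x1 $ a = x2 $ a" by simp
  qed (use x1 x2 in auto)
  then show "k1 = k2" unfolding x1_def x2_def using c_eq_iff[of "k1+1" "k2+1"] k by auto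
qed

end


context bmzctx begin

lemma AA_car: "AA R \<in> carrier_mat NN NN" unfolding AA_def by simp

lemma AA_mult: "x \<in> carrier_vec NN \<Longrightarrow> i < NN \<Longrightarrow> (AA R *\<^sub>v x) $ i = (\<Sum>k<NN. x $ k * rowv R k $ i)"
  unfolding AA_def by (auto simp: scalar_prod_def atLeast0LessThan intro!: sum.cong)

lemma lincomb_rows: assumes R: "R \<in> Rset d r c" and I: "I \<subseteq> {..<NN}"
  shows "lincomb NN l (rowv R ` I) = AA R *\<^sub>v vec NN (\<lambda>k. if k \<in> I then l (rowv R k) else 0)"
proof (rule eq_vecI)
  fix i assume "i < dim_vec (AA R *\<^sub>v vec NN (\<lambda>k. if k \<in> I then l (rowv R k) else 0))"
  hence i: "i < NN" by (simp add: AA_def)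
  have inj: "inj_on (rowv R) I" using rowv_inj[OF R] I by (rule inj_on_subset)
  have "lincomb NN l (rowv R ` I) $ i = (\<Sum>v\<in>rowv R ` I. l v * v $ i)"
    unfolding lincomb_def using i by simp
  also have "\<dots> = (\<Sum>k\<in>I. l (rowv R k) * rowv R k $ i)" by (rule sum.reindex[OF inj, unfolded comp_def])
  also have "\<dots> = (\<Sum>k<NN. (if k \<in> I then l (rowv R k) else 0) * rowv R k $ i)"
    using I by (auto intro!: sum.mono_neutral_cong_left)
  also have "\<dots> = (AA R *\<^sub>v vec NN (\<lambda>k. if k \<in> I then l (rowv R k) else 0)) $ i"
    using i by (subst AA_mult) auto
  finally show "lincomb NN l (rowv R ` I) $ i = (AA R *\<^sub>v vec NN (\<lambda>k. if k \<in> I then l (rowv R k) else 0)) $ i" .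
qed (simp add: lincomb_def AA_def)

lemma sum_rows: assumes R: "R \<in> Rset d r c"
  shows "sum l (rowv R ` {..<NN}) = (\<Sum>k<NN. l (rowv R k))"
  by (rule sum.reindex[OF rowv_inj[OF R], unfolded comp_def])

lemma AA_det: assumes R: "R \<in> Rset d r c" shows "det (AA R) \<noteq> 0"
proof
  assume "det (AA R) = 0"
  then obtain x where x: "x \<in> carrier_vec NN" "x \<noteq> 0\<^sub>v NN" "AA R *\<^sub>v x = 0\<^sub>v NN"
    using det_0_iff_vec_prod_zero[OF AA_car] by blast
  define S where "S = rowv R ` {..<NN}"
  define l where "l v = x $ (the_inv_into {..<NN} (rowv R) v)" for v
  have lr: "l (rowv R k) = x $ k" if "k < NN" for k
    unfolding l_def using the_inv_into_f_f[OF rowv_inj[OF R]] that by simp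
  have xv: "vec NN (\<lambda>k. if k \<in> {..<NN} then l (rowv R k) else 0) = x"
    using x(1) lr by (intro eq_vecI) auto
  have lc: "lincomb NN l S = 0\<^sub>v NN" unfolding S_def lincomb_rows[OF R subset_refl] xv by (rule x(3))
  define \<sigma> where "\<sigma> = (\<Sum>k<NN. x $ k)"
  have sl: "sum l S = \<sigma>" unfolding S_def sum_rows[OF R] \<sigma>_def using lr by simp
  show False
  proof (cases "\<sigma> = 0")
    case True
    have "\<forall>v\<in>S. l v = 0" using affind[OF R] lc sl True unfolding aff_indep_def S_def by auto
    hence "x = 0\<^sub>v NN" using lr x(1) unfolding S_def by (intro eq_vecI) auto
    with x(2) show False by simp
  next
    case False
    define l' where "l' v = l v / \<sigma>" for v
    have "sum l' S = 1" unfolding l'_def using sl False by (simp add: sum_divide_distrib[symmetric])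
    moreover have "lincomb NN l' S = 0\<^sub>v NN"
    proof -
      have "lincomb NN l' S = (1/\<sigma>) \<cdot>\<^sub>v lincomb NN l S" unfolding lincomb_def l'_def
        by (intro eq_vecI) (auto simp: sum_distrib_left)
      then show ?thesis using lc by (auto intro!: eq_vecI)
    qed
    ultimately have "0\<^sub>v NN \<in> aff_hull NN S" unfolding aff_hull_def by force
    with aff0[OF R] show False unfolding S_def by simp
  qed
qed

end


context bmzctx begin

end

lemma ar_recon: "(q::nat) > 0 \<Longrightarrow> j \<ge> 1 \<Longrightarrow> ((j - 1) div q + 1 - 1) * q + ((j - 1) mod q + 1) = j"
  by (simp add: add.commute)
lemma ar_div: "(q::nat) > 0 \<Longrightarrow> j' \<in> {1..q} \<Longrightarrow> (k * q + j' - 1) div q = k"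
proof -
  assume q: "q > 0" and j: "j' \<in> {1..q}"
  obtain j'' where jj: "j' = Suc j''" using j by (cases j') auto
  have "k * q + j' - 1 = j'' + q * k" using jj by (simp add: mult.commute)
  then show ?thesis using j q jj by simp
qed
lemma ar_mod: "(q::nat) > 0 \<Longrightarrow> j' \<in> {1..q} \<Longrightarrow> (k * q + j' - 1) mod q = j' - 1"
proof -
  assume q: "q > 0" and j: "j' \<in> {1..q}"
  obtain j'' where jj: "j' = Suc j''" using j by (cases j') auto
  have "k * q + j' - 1 = j'' + q * k" using jj by (simp add: mult.commute)
  then show ?thesis using j q jj by simp
qed
lemma ar_lt: "(q::nat) > 0 \<Longrightarrow> j \<in> {1..(d+1)*q} \<Longrightarrow> (j - 1) div q < d + 1"
  by (auto simp: div_less_iff_less_mult)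
lemma ar_img: "(q::nat) > 0 \<Longrightarrow> {k*q + 1 .. (k+1)*q} = (\<lambda>j'. k*q + j') ` {1..q}"
proof -
  assume q: "q > 0"
  show ?thesis
  proof
    show "{k*q + 1 .. (k+1)*q} \<subseteq> (\<lambda>j'. k*q + j') ` {1..q}"
    proof
      fix x assume x: "x \<in> {k*q + 1 .. (k+1)*q}"
      then have "x = k*q + (x - k*q)" "x - k*q \<in> {1..q}" by auto
      then show "x \<in> (\<lambda>j'. k*q + j') ` {1..q}" by blast
    qed
    show "(\<lambda>j'. k*q + j') ` {1..q} \<subseteq> {k*q + 1 .. (k+1)*q}" by auto
  qed
qed
lemma ar_bound: "(q::nat) > 0 \<Longrightarrow> k \<in> {1..d+1} \<Longrightarrow> j' \<in> {1..q} \<Longrightarrow> (k-1)*q + j' \<in> {1..(d+1)*q}"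
proof -
  assume q: "q > 0" and k: "k \<in> {1..d+1}" and j: "j' \<in> {1..q}"
  have "(k-1)*q + j' \<le> (k-1)*q + q" using j by simp
  also have "\<dots> = k * q" using k by (cases k) auto
  also have "\<dots> \<le> (d+1)*q" using k by (intro mult_right_mono) auto
  finally show ?thesis using j by auto
qed

context bmzctx begin

definition blk where "blk j = (j - 1) div (r - 1) + 1"
definition pos where "pos j = (j - 1) mod (r - 1) + 1"
definition cl where "cl R k = (\<lambda>j'. cls r R (c ((k - 1) * (r - 1) + j')))"

lemma NN_eq: "NN = (d+1) * (r-1)" unfolding bmzN_def ..

lemma idx_bound: "k \<in> {1..d+1} \<Longrightarrow> j' \<in> {1..r-1} \<Longrightarrow> (k-1)*(r-1) + j' \<in> {1..NN}"
  unfolding NN_eq using ar_bound[OF r1] by blast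

lemma blk_pos: assumes j: "j \<in> {1..NN}"
  shows "blk j \<in> {1..d+1}" "pos j \<in> {1..r-1}" "(blk j - 1) * (r-1) + pos j = j"
proof -
  obtain q where q: "r - 1 = q" "q > 0" using r1 by auto
  have j': "j \<in> {1..(d+1)*q}" using j unfolding NN_eq q(1) .
  show "blk j \<in> {1..d+1}" unfolding blk_def q(1) using ar_lt[OF q(2) j'] by auto
  show "pos j \<in> {1..r-1}" unfolding pos_def q(1) using q(2) mod_less_divisor[OF q(2), of "j - 1"] by auto
  show "(blk j - 1) * (r-1) + pos j = j" unfolding blk_def pos_def q(1)
    using ar_recon[OF q(2), of j] j' by auto
qed

lemma idx_blk: assumes k: "k \<in> {1..d+1}" and j: "j' \<in> {1..r-1}"
  shows "blk ((k-1)*(r-1) + j') = k" "pos ((k-1)*(r-1) + j') = j'"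
proof -
  obtain q where q: "r - 1 = q" "q > 0" using r1 by auto
  have j': "j' \<in> {1..q}" using j q by auto
  show "blk ((k-1)*(r-1) + j') = k" unfolding blk_def q(1) ar_div[OF q(2) j'] using k by auto
  show "pos ((k-1)*(r-1) + j') = j'" unfolding pos_def q(1) ar_mod[OF q(2) j'] using j' by auto
qed

lemma block_eq: "k \<in> {1..d+1} \<Longrightarrow> block d r c k = (\<lambda>j'. c ((k-1)*(r-1) + j')) ` {1..r-1}"
proof -
  assume k: "k \<in> {1..d+1}"
  obtain q where q: "r - 1 = q" "q > 0" using r1 by auto
  have kk: "k = (k - 1) + 1" using k by auto
  have eq: "{(k - 1) * q + 1..k * q} = (\<lambda>j'. (k-1)*q + j') ` {1..q}"
    using ar_img[OF q(2), of "k-1"] kk by metis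
  have "block d r c k = c ` {(k - 1) * q + 1..k * q}" unfolding block_def q(1) using k by auto
  also have "\<dots> = c ` ((\<lambda>j'. (k-1)*q + j') ` {1..q})" by (simp only: eq)
  finally show ?thesis unfolding q(1) by (simp only: image_image)
qed

lemma c_in_blk: "j \<in> {1..NN} \<Longrightarrow> c j \<in> block d r c (blk j)"
  using blk_pos[of j] block_eq[of "blk j"] by (metis image_eqI)

lemma block_unique: assumes j: "j \<in> {1..NN}" and k: "k \<in> {1..d+2}" and cb: "c j \<in> block d r c k"
  shows "k = blk j"
proof (cases "k = d+2")
  case True
  then have "c j = c (NN+1)" using cb unfolding block_def zpt_def by auto
  then show ?thesis using c_eq_iff[of j "NN+1"] j by auto
next
  case False
  with k have k': "k \<in> {1..d+1}" by auto
  then obtain j' where j': "j' \<in> {1..r-1}" "c j = c ((k-1)*(r-1) + j')" using cb block_eq by auto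
  have "j = (k-1)*(r-1) + j'" using c_eq_iff[of j "(k-1)*(r-1) + j'"] j' idx_bound[OF k' j'(1)] j by auto
  then show ?thesis using idx_blk[OF k' j'(1)] by simp
qed

lemma cl_mem: assumes R: "R \<in> Rset d r c" and k: "k \<in> {1..d+1}" and j: "j' \<in> {1..r-1}"
  shows "cl R k j' \<in> {1..r}" "c ((k-1)*(r-1) + j') \<in> R (cl R k j')"
proof -
  have "c ((k-1)*(r-1) + j') \<in> G" unfolding G_eq using idx_bound[OF k j] by auto
  from cls_mem[OF R this] show "cl R k j' \<in> {1..r}" "c ((k-1)*(r-1) + j') \<in> R (cl R k j')"
    unfolding cl_def by auto
qed

lemma cl_inj: assumes R: "R \<in> Rset d r c" and k: "k \<in> {1..d+1}"
  shows "inj_on (cl R k) {1..r-1}"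
proof
  fix j1 j2 assume j: "j1 \<in> {1..r-1}" "j2 \<in> {1..r-1}" and eq: "cl R k j1 = cl R k j2"
  have "c ((k-1)*(r-1) + j1) = c ((k-1)*(r-1) + j2)"
  proof -
    have m1: "c ((k-1)*(r-1) + j1) \<in> R (cl R k j1)" by (rule cl_mem(2)[OF R k j(1)])
    have m2: "c ((k-1)*(r-1) + j2) \<in> R (cl R k j1)" using cl_mem(2)[OF R k j(2)] eq by simp
    have b1: "c ((k-1)*(r-1) + j1) \<in> block d r c k" using block_eq[OF k] j(1) by auto
    have b2: "c ((k-1)*(r-1) + j2) \<in> block d r c k" using block_eq[OF k] j(2) by auto
    have k': "k \<in> {1..d+2}" using k by auto
    show ?thesis by (rule R_card[OF R k' m1 m2 b1 b2])
  qed
  then have "(k-1)*(r-1) + j1 = (k-1)*(r-1) + j2"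
    using c_eq_iff idx_bound[OF k j(1)] idx_bound[OF k j(2)] by auto
  then show "j1 = j2" by simp
qed

lemma miss_ex: assumes R: "R \<in> Rset d r c" and k: "k \<in> {1..d+1}"
  shows "\<exists>m. {1..r} - cl R k ` {1..r-1} = {m}"
proof -
  have sub: "cl R k ` {1..r-1} \<subseteq> {1..r}" using cl_mem[OF R k] by auto
  have "card (cl R k ` {1..r-1}) = r - 1" using card_image[OF cl_inj[OF R k]] by simp
  then have "card ({1..r} - cl R k ` {1..r-1}) = 1" using card_Diff_subset[OF _ sub] r2 by simp
  then show ?thesis by (rule card_1_singletonE) auto
qed

lemma pik_in: "j \<in> {1..r-1} \<Longrightarrow> pik r c R k j = cl R k j"
  unfolding pik_def cl_def by simp

lemma pik_r: assumes R: "R \<in> Rset d r c" and k: "k \<in> {1..d+1}"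
  shows "pik r c R k r \<in> {1..r}" "pik r c R k r \<notin> cl R k ` {1..r-1}"
    "\<And>l. l \<in> {1..r} \<Longrightarrow> l \<notin> cl R k ` {1..r-1} \<Longrightarrow> l = pik r c R k r"
proof -
  obtain m where m: "{1..r} - cl R k ` {1..r-1} = {m}" using miss_ex[OF R k] by auto
  have nr: "(r \<in> {1..r-1}) = False" using r2 by auto
  have "pik r c R k r = (THE i. i \<in> {1..r} \<and> i \<notin> cl R k ` {1..r-1})"
    unfolding pik_def by (simp only: nr if_False if_True simp_thms cl_def)
  also have "\<dots> = m" by (rule the_equality) (use m in blast)+
  finally have pm: "pik r c R k r = m" .
  show "pik r c R k r \<in> {1..r}" "pik r c R k r \<notin> cl R k ` {1..r-1}" using m pm by auto
  show "\<And>l. l \<in> {1..r} \<Longrightarrow> l \<notin> cl R k ` {1..r-1} \<Longrightarrow> l = pik r c R k r" using m pm by auto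
qed

lemma pik_out: "j \<notin> {1..r} \<Longrightarrow> pik r c R k j = j"
  unfolding pik_def using r2 by auto

lemma pik_permutes: assumes R: "R \<in> Rset d r c" and k: "k \<in> {1..d+1}"
  shows "pik r c R k permutes {1..r}"
proof (rule bij_imp_permutes)
  have img: "pik r c R k ` {1..r} \<subseteq> {1..r}"
  proof
    fix y assume "y \<in> pik r c R k ` {1..r}"
    then obtain j where j: "j \<in> {1..r}" "y = pik r c R k j" by auto
    show "y \<in> {1..r}"
    proof (cases "j = r")
      case True then show ?thesis using pik_r(1)[OF R k] j by simp
    next
      case False then have "j \<in> {1..r-1}" using j by auto
      then show ?thesis using pik_in[of j] cl_mem(1)[OF R k] j by simp
    qed
  qed
  have inj: "inj_on (pik r c R k) {1..r}"
  proof
    fix x y assume xy: "x \<in> {1..r}" "y \<in> {1..r}" "pik r c R k x = pik r c R k y"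
    have xc: "x = r \<or> x \<in> {1..r-1}" and yc: "y = r \<or> y \<in> {1..r-1}" using xy(1,2) by auto
    show "x = y"
    proof (cases "x = r")
      case True
      show ?thesis
      proof (cases "y = r")
        case False
        with yc have y: "y \<in> {1..r-1}" by simp
        have "pik r c R k y \<in> cl R k ` {1..r-1}" using pik_in[OF y] y by simp
        with xy(3) True pik_r(2)[OF R k] show ?thesis by simp
      qed (use True in simp)
    next
      case False
      with xc have x: "x \<in> {1..r-1}" by simp
      show ?thesis
      proof (cases "y = r")
        case True
        have "pik r c R k x \<in> cl R k ` {1..r-1}" using pik_in[OF x] x by simp
        with xy(3) True pik_r(2)[OF R k] show ?thesis by simp
      next
        case False
        with yc have y: "y \<in> {1..r-1}" by simp
        have "cl R k x = cl R k y" using xy(3) pik_in[OF x] pik_in[OF y] by simp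
        with cl_inj[OF R k] x y show ?thesis unfolding inj_on_def by blast
      qed
    qed
  qed
  show "bij_betw (pik r c R k) {1..r} {1..r}"
    using inj img by (simp add: bij_betw_def endo_inj_surj)
  show "\<And>x. x \<notin> {1..r} \<Longrightarrow> pik r c R k x = x" by (rule pik_out)
qed

lemma pik_perm: "R \<in> Rset d r c \<Longrightarrow> k \<in> {1..d+1} \<Longrightarrow> permutation (pik r c R k)"
  using pik_permutes permutation_permutes by blast

end


context bmzctx begin

definition mvc where "mvc R j = pik r c R (blk j) r"
definition mv where "mv R j = (\<lambda>l. if l = cls r R (c j) then R l - {c j}
   else if l = mvc R j then insert (c j) (R l) else R l)"

context
  fixes R j assumes R: "R \<in> Rset d r c" and j: "j \<in> {1..NN}"
begin

lemma aG: "c j \<in> G" unfolding G_eq using j by auto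
lemma anz: "c j \<noteq> z" using c_eq_iff[of j "NN+1"] j z_eq by auto
lemma iR: "cls r R (c j) \<in> {1..r}" "c j \<in> R (cls r R (c j))" using cls_mem[OF R aG] by auto
lemma kk: "blk j \<in> {1..d+1}" "pos j \<in> {1..r-1}" "(blk j - 1) * (r-1) + pos j = j"
  using blk_pos[OF j] by auto
lemma i_cl: "cls r R (c j) = cl R (blk j) (pos j)"
  unfolding cl_def using kk(3) by simp
lemma mF: "mvc R j \<in> {1..r}" "mvc R j \<notin> cl R (blk j) ` {1..r-1}"
  unfolding mvc_def using pik_r(1,2)[OF R kk(1)] by auto
lemma mi: "mvc R j \<noteq> cls r R (c j)"
  using mF(2) i_cl kk(2) by auto
lemma mblock: "q \<in> R (mvc R j) \<Longrightarrow> q \<notin> block d r c (blk j)"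
proof
  assume q: "q \<in> R (mvc R j)" "q \<in> block d r c (blk j)"
  then obtain j' where j': "j' \<in> {1..r-1}" "q = c ((blk j - 1)*(r-1) + j')"
    using block_eq[OF kk(1)] by auto
  have "cls r R q = mvc R j" by (rule cls_eq[OF R q(1)])
  then have "mvc R j = cl R (blk j) j'" unfolding cl_def j'(2) by simp
  with mF(2) j'(1) show False by auto
qed

lemma mem_mv: "p \<in> mv R j l \<longleftrightarrow> (if p = c j then l = mvc R j else p \<in> R l)"
proof (cases "p = c j")
  case True
  have "c j \<in> R l \<longleftrightarrow> l = cls r R (c j)" using iR R_disj[OF R] by metis
  then show ?thesis unfolding mv_def using True mi by auto
next
  case False
  then show ?thesis unfolding mv_def by auto
qed

lemma mv_in: "mv R j \<in> Rset d r c"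
proof -
  let ?R = "mv R j"
  have out: "\<forall>l. l \<notin> {1..r} \<longrightarrow> ?R l = {}"
  proof (intro allI impI)
    fix l assume l: "l \<notin> {1..r}"
    show "?R l = {}" using mem_mv[of _ l] R_out[OF R l] mF(1) l by (auto split: if_splits)
  qed
  have sub: "\<forall>l\<in>{1..r}. ?R l \<subseteq> G"
  proof (intro ballI subsetI)
    fix l p assume "p \<in> ?R l"
    then show "p \<in> G" using mem_mv[of p l] R_sub[OF R, of l] aG by (cases "p = c j") auto
  qed
  have disj: "\<forall>l\<in>{1..r}. \<forall>l'\<in>{1..r}. l \<noteq> l' \<longrightarrow> ?R l \<inter> ?R l' = {}"
    using mem_mv R_disj[OF R] by (auto split: if_splits)
  have card: "\<forall>l\<in>{1..r}. \<forall>k\<in>{1..d+2}. card (?R l \<inter> block d r c k) \<le> 1"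
  proof (intro ballI)
    fix l k assume l: "l \<in> {1..r}" and k: "k \<in> {1..d+2}"
    have "\<forall>p\<in>?R l \<inter> block d r c k. \<forall>q\<in>?R l \<inter> block d r c k. p = q"
    proof (intro ballI)
      fix p q assume p: "p \<in> ?R l \<inter> block d r c k" and q: "q \<in> ?R l \<inter> block d r c k"
      show "p = q"
      proof (cases "p = c j"; cases "q = c j")
        assume pa: "p = c j" and qa: "q \<noteq> c j"
        have "k = blk j" using block_unique[OF j k] p pa by auto
        moreover have "q \<in> R (mvc R j)" using q qa p pa mem_mv by auto
        ultimately show ?thesis using mblock q by auto
      next
        assume pa: "p \<noteq> c j" and qa: "q = c j"
        have "k = blk j" using block_unique[OF j k] q qa by auto
        moreover have "p \<in> R (mvc R j)" using q qa p pa mem_mv by auto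
        ultimately show ?thesis using mblock p by auto
      next
        assume pa: "p \<noteq> c j" and qa: "q \<noteq> c j"
        then show ?thesis using R_card[OF R k, of p l q] p q mem_mv by auto
      qed simp
    qed
    moreover have "finite (?R l \<inter> block d r c k)" using fin_block by auto
    ultimately show "card (?R l \<inter> block d r c k) \<le> 1" using card_le_Suc0_iff_eq by fastforce
  qed
  have cov: "(\<Union>l\<in>{1..r}. ?R l) = G"
  proof
    show "(\<Union>l\<in>{1..r}. ?R l) \<subseteq> G" using sub by auto
    show "G \<subseteq> (\<Union>l\<in>{1..r}. ?R l)"
    proof
      fix p assume p: "p \<in> G"
      show "p \<in> (\<Union>l\<in>{1..r}. ?R l)"
      proof (cases "p = c j")
        case True then show ?thesis using mem_mv mF(1) by auto
      next
        case False
        then show ?thesis using R_cov[OF R p] mem_mv by auto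
      qed
    qed
  qed
  have zr: "z \<in> ?R r" using mem_mv z_in[OF R] anz by auto
  show ?thesis unfolding Rset_def maximal_rainbow_def rainbow_def
    using out sub disj card cov zr by blast
qed

lemma cls_mv: "p \<in> G \<Longrightarrow> p \<noteq> c j \<Longrightarrow> cls r (mv R j) p = cls r R p"
  using cls_eq[OF mv_in, of p "cls r R p"] cls_mem[OF R, of p] mem_mv by auto

lemma cls_mv_a: "cls r (mv R j) (c j) = mvc R j"
  using cls_eq[OF mv_in, of "c j" "mvc R j"] mem_mv by auto

lemma cl_mv: assumes k': "k' \<in> {1..d+1}" and j': "j' \<in> {1..r-1}" and ne: "(k'-1)*(r-1) + j' \<noteq> j"
  shows "cl (mv R j) k' j' = cl R k' j'"
proof -
  have "c ((k'-1)*(r-1) + j') \<noteq> c j" using c_eq_iff idx_bound[OF k' j'] j ne by auto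
  moreover have "c ((k'-1)*(r-1) + j') \<in> G" using idx_bound[OF k' j'] unfolding G_eq by auto
  ultimately show ?thesis unfolding cl_def using cls_mv by simp
qed

lemma mvc_mv: "mvc (mv R j) j = cls r R (c j)"
proof -
  have "cls r R (c j) = pik r c (mv R j) (blk j) r"
  proof (rule pik_r(3)[OF mv_in kk(1)])
    show "cls r R (c j) \<in> {1..r}" by (rule iR(1))
    show "cls r R (c j) \<notin> cl (mv R j) (blk j) ` {1..r-1}"
    proof
      assume "cls r R (c j) \<in> cl (mv R j) (blk j) ` {1..r-1}"
      then obtain j' where j': "j' \<in> {1..r-1}" "cls r R (c j) = cl (mv R j) (blk j) j'" by auto
      show False
      proof (cases "j' = pos j")
        case True
        then have "cl (mv R j) (blk j) j' = mvc R j" unfolding cl_def using kk(3) cls_mv_a by simp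
        with j' mi show False by simp
      next
        case False
        then have ne: "(blk j - 1)*(r-1) + j' \<noteq> j" using idx_blk[OF kk(1) j'(1)] by metis
        have "cl R (blk j) j' = cl R (blk j) (pos j)" using j' cl_mv[OF kk(1) j'(1) ne] i_cl by simp
        with cl_inj[OF R kk(1)] j'(1) kk(2) False show False unfolding inj_on_def by blast
      qed
    qed
  qed
  then show ?thesis unfolding mvc_def by simp
qed

lemma mv_mv: "mv (mv R j) j = R"
proof -
  have *: "p \<in> mv (mv R j) j l \<longleftrightarrow> p \<in> R l" for l p
  proof -
    have "p \<in> mv (mv R j) j l \<longleftrightarrow> (if p = c j then l = mvc (mv R j) j else p \<in> mv R j l)"
      unfolding mv_def[of "mv R j"] using cls_mv_a mvc_mv mem_mv[of p]
      by (auto simp: mi[symmetric])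
    also have "\<dots> \<longleftrightarrow> p \<in> R l"
      using mvc_mv mem_mv iR R_disj[OF R] by (auto, metis)
    finally show ?thesis .
  qed
  show ?thesis by (simp add: fun_eq_iff set_eq_iff *)
qed

lemma pik_mv_other: assumes k': "k' \<in> {1..d+1}" "k' \<noteq> blk j"
  shows "pik r c (mv R j) k' = pik r c R k'"
proof -
  have clq: "cl (mv R j) k' j' = cl R k' j'" if "j' \<in> {1..r-1}" for j'
  proof (rule cl_mv[OF k'(1) that])
    show "(k'-1)*(r-1) + j' \<noteq> j" using idx_blk[OF k'(1) that] k'(2) by metis
  qed
  have img: "cl (mv R j) k' ` {1..r-1} = cl R k' ` {1..r-1}" using clq by (rule image_cong[OF refl])
  have pr: "pik r c (mv R j) k' r = pik r c R k' r"
    using pik_r(1,2)[OF mv_in k'(1)] pik_r(3)[OF R k'(1)] img by metis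
  show ?thesis
  proof
    fix x show "pik r c (mv R j) k' x = pik r c R k' x"
      using pr pik_in[of x] clq pik_out by (cases "x \<in> {1..r-1}"; cases "x = r") auto
  qed
qed

lemma pik_mv_same: "pik r c (mv R j) (blk j) = pik r c R (blk j) \<circ> Transposition.transpose (pos j) r"
proof
  fix x
  have pr: "pos j \<noteq> r" using kk(2) r2 by auto
  show "pik r c (mv R j) (blk j) x = (pik r c R (blk j) \<circ> Transposition.transpose (pos j) r) x"
  proof (cases "x \<in> {1..r-1}")
    case True
    show ?thesis
    proof (cases "x = pos j")
      case True
      have "pik r c (mv R j) (blk j) x = cl (mv R j) (blk j) (pos j)" using pik_in kk(2) True by simp
      also have "\<dots> = mvc R j" unfolding cl_def using kk(3) cls_mv_a by simp
      finally show ?thesis using True unfolding mvc_def by simp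
    next
      case False
      have ne: "(blk j - 1)*(r-1) + x \<noteq> j" using idx_blk[OF kk(1) \<open>x \<in> {1..r-1}\<close>] False by metis
      have xr: "x \<noteq> r" using \<open>x \<in> {1..r-1}\<close> by auto
      show ?thesis using pik_in[OF \<open>x \<in> {1..r-1}\<close>] cl_mv[OF kk(1) \<open>x \<in> {1..r-1}\<close> ne] False xr
        by simp
    qed
  next
    case False
    show ?thesis
    proof (cases "x = r")
      case True
      have "pik r c (mv R j) (blk j) x = cls r R (c j)" using mvc_mv True unfolding mvc_def by simp
      also have "\<dots> = pik r c R (blk j) (pos j)" using i_cl pik_in[OF kk(2)] by simp
      finally show ?thesis using True by simp
    next
      case xr: False
      with False have "x \<notin> {1..r}" by auto
      moreover have "x \<noteq> pos j" using False kk(2) by auto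
      ultimately show ?thesis using pik_out xr by simp
    qed
  qed
qed

lemma csgn_mv: "csgn d r c (mv R j) = - csgn d r c R"
proof -
  let ?k = "blk j"
  have fin: "finite {1..d+1}" by simp
  have pr: "pos j \<noteq> r" using kk(2) r2 by auto
  have "sign (pik r c (mv R j) ?k) = - sign (pik r c R ?k)"
    unfolding pik_mv_same using pr
    by (simp add: sign_compose[OF pik_perm[OF R kk(1)] permutation_swap_id] sign_swap_id)
  moreover have "(\<Prod>k\<in>{1..d+1} - {?k}. real_of_int (sign (pik r c (mv R j) k))) =
      (\<Prod>k\<in>{1..d+1} - {?k}. real_of_int (sign (pik r c R k)))"
    using pik_mv_other by (intro prod.cong) auto
  ultimately show ?thesis unfolding csgn_def
    using prod.remove[OF fin kk(1), of "\<lambda>k. real_of_int (sign (pik r c (mv R j) k))"]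
      prod.remove[OF fin kk(1), of "\<lambda>k. real_of_int (sign (pik r c R k))"] by simp
qed

lemma rowv_mv: "k0 < NN \<Longrightarrow> k0 + 1 \<noteq> j \<Longrightarrow> rowv (mv R j) k0 = rowv R k0"
proof -
  assume k0: "k0 < NN" "k0 + 1 \<noteq> j"
  have "c (k0+1) \<noteq> c j" using c_eq_iff[of "k0+1" j] j k0 by auto
  moreover have "c (k0+1) \<in> G" using k0 unfolding G_eq by auto
  ultimately show ?thesis unfolding rowv_def using cls_mv by simp
qed

end

end


context bmzctx begin

definition PP where "PP R j0 = mv R (j0 + 1)"

lemma core_inst: "core NN (Rset d r c) AA (csgn d r c) PP"
proof
  show "finite (Rset d r c)" by (rule Rset_fin)
  show "\<And>R. R \<in> Rset d r c \<Longrightarrow> AA R \<in> carrier_mat NN NN" by (rule AA_car)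
  show "\<And>R. R \<in> Rset d r c \<Longrightarrow> det (AA R) \<noteq> 0" by (rule AA_det)
  show "\<And>R j. R \<in> Rset d r c \<Longrightarrow> j < NN \<Longrightarrow> PP R j \<in> Rset d r c"
    unfolding PP_def by (rule mv_in) auto
  show "AA (PP R j) $$ (i, k) = AA R $$ (i, k)" if "R \<in> Rset d r c" "j < NN" "k < NN" "k \<noteq> j" "i < NN"
    for R j k i
  proof -
    have "rowv (mv R (j+1)) k = rowv R k" by (rule rowv_mv) (use that in auto)
    then show ?thesis unfolding PP_def AA_def using that by simp
  qed
  show "\<And>R j. R \<in> Rset d r c \<Longrightarrow> j < NN \<Longrightarrow> PP (PP R j) j = R"
    unfolding PP_def by (rule mv_mv) auto
  show "\<And>R j. R \<in> Rset d r c \<Longrightarrow> j < NN \<Longrightarrow> csgn d r c (PP R j) = - csgn d r c R"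
    unfolding PP_def by (rule csgn_mv) auto
qed

end

sublocale bmzctx \<subseteq> cr: core "bmzN d r" "Rset d r c" AA "csgn d r c" PP
  by (rule core_inst)

context bmzctx begin

lemma cone_hit: assumes R: "R \<in> Rset d r c" and I: "I \<subseteq> {..<NN}" and x: "x \<in> carrier_vec NN"
  and nn: "\<forall>k<NN. 0 \<le> x $ k" and out: "\<forall>k<NN. k \<notin> I \<longrightarrow> x $ k = 0"
  and u: "u = AA R *\<^sub>v x" and unz: "u \<noteq> 0\<^sub>v NN"
  shows "ray u \<inter> conv_hull NN (rowv R ` I) \<noteq> {}"
proof -
  define s where "s = (\<Sum>k<NN. x $ k)"
  have s0: "s \<ge> 0" unfolding s_def using nn by (auto intro: sum_nonneg)
  have sp: "s > 0"
  proof (rule ccontr)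
    assume "\<not> s > 0"
    with s0 have "s = 0" by simp
    then have "\<forall>k\<in>{..<NN}. x $ k = 0" unfolding s_def using nn by (subst (asm) sum_nonneg_eq_0_iff) auto
    then have "x = 0\<^sub>v NN" using x by (intro eq_vecI) auto
    then have "u = 0\<^sub>v NN" using u AA_car[of R] by (auto intro!: eq_vecI simp: scalar_prod_def)
    with unz show False by simp
  qed
  define l where "l v = x $ (the_inv_into {..<NN} (rowv R) v) / s" for v
  have lr: "l (rowv R k) = x $ k / s" if "k < NN" for k
    unfolding l_def using the_inv_into_f_f[OF rowv_inj[OF R]] that by simp
  have v1: "vec NN (\<lambda>k. if k \<in> I then l (rowv R k) else 0) = (1/s) \<cdot>\<^sub>v x"
    using x lr out by (intro eq_vecI) auto
  have lc: "lincomb NN l (rowv R ` I) = (1/s) \<cdot>\<^sub>v u"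
    unfolding lincomb_rows[OF R I] v1 u using AA_car[of R] x by (simp add: mult_mat_vec)
  have inj: "inj_on (rowv R) I" using rowv_inj[OF R] I by (rule inj_on_subset)
  have "sum l (rowv R ` I) = (\<Sum>k\<in>I. l (rowv R k))" by (rule sum.reindex[OF inj, unfolded comp_def])
  also have "\<dots> = (\<Sum>k\<in>I. x $ k / s)" using lr I by (intro sum.cong) auto
  also have "\<dots> = (\<Sum>k<NN. x $ k / s)" using I out by (intro sum.mono_neutral_left) auto
  also have "\<dots> = 1" using sp unfolding s_def by (simp add: sum_divide_distrib[symmetric])
  finally have sl: "sum l (rowv R ` I) = 1" .
  have lnn: "\<forall>v\<in>rowv R ` I. 0 \<le> l v" using lr nn sp I by auto
  have "(1/s) \<cdot>\<^sub>v u \<in> ray u" unfolding ray_def using sp by auto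
  moreover have "(1/s) \<cdot>\<^sub>v u \<in> conv_hull NN (rowv R ` I)"
    unfolding conv_hull_def using lc sl lnn by force
  ultimately show ?thesis by blast
qed

lemma hit_iff: assumes R: "R \<in> Rset d r c" and u: "u \<in> carrier_vec NN" and unz: "u \<noteq> 0\<^sub>v NN"
  shows "ray u \<inter> facet d r w c R \<noteq> {} \<longleftrightarrow> cr.ind R u"
proof
  assume "ray u \<inter> facet d r w c R \<noteq> {}"
  then obtain t l where t: "0 \<le> t" and lnn: "\<forall>v\<in>rowv R ` {..<NN}. 0 \<le> l v"
    and sl: "sum l (rowv R ` {..<NN}) = 1" and eq: "t \<cdot>\<^sub>v u = lincomb NN l (rowv R ` {..<NN})"
    unfolding facet_def Phi_rem_z[OF R] ray_def conv_hull_def by auto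
  define y where "y = vec NN (\<lambda>k. if k \<in> {..<NN} then l (rowv R k) else 0)"
  have y: "y \<in> carrier_vec NN" unfolding y_def by simp
  have lc: "lincomb NN l (rowv R ` {..<NN}) = AA R *\<^sub>v y" unfolding y_def by (rule lincomb_rows[OF R subset_refl])
  have tnz: "t \<noteq> 0"
  proof
    assume "t = 0"
    moreover have "0 \<cdot>\<^sub>v u = 0\<^sub>v NN" using u by (intro eq_vecI) auto
    ultimately have "lincomb NN l (rowv R ` {..<NN}) = 0\<^sub>v NN" using eq by simp
    then have "0\<^sub>v NN \<in> aff_hull NN (rowv R ` {..<NN})" unfolding aff_hull_def using sl by force
    with aff0[OF R] show False by simp
  qed
  have "u = AA R *\<^sub>v ((1/t) \<cdot>\<^sub>v y)"
  proof -
    have "AA R *\<^sub>v ((1/t) \<cdot>\<^sub>v y) = (1/t) \<cdot>\<^sub>v (t \<cdot>\<^sub>v u)" using lc eq AA_car[of R] y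
      by (simp add: mult_mat_vec)
    also have "\<dots> = u" using tnz by (simp add: smult_smult_assoc)
    finally show ?thesis by simp
  qed
  then have D: "cr.D R j u = ((1/t) \<cdot>\<^sub>v y) $ j * det (AA R)" if "j < NN" for j
    using cr.D_cramer[OF R that, of "(1/t) \<cdot>\<^sub>v y"] y by simp
  show "cr.ind R u" unfolding cr.ind_def
  proof (intro allI impI)
    fix j assume j: "j < NN"
    have "((1/t) \<cdot>\<^sub>v y) $ j \<ge> 0" using j t lnn unfolding y_def by auto
    then show "0 \<le> cr.D R j u * det (AA R)" unfolding D[OF j]
      by (simp add: mult.assoc)
  qed
next
  assume ind: "cr.ind R u"
  define x where "x = vec NN (\<lambda>j. cr.D R j u / det (AA R))"
  have ux: "u = AA R *\<^sub>v x" unfolding x_def by (rule cr.D_repr[OF R u])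
  have nn: "\<forall>k<NN. 0 \<le> x $ k" unfolding x_def using ind unfolding cr.ind_def
    by (auto simp: zero_le_divide_iff zero_le_mult_iff)
  have "ray u \<inter> conv_hull NN (rowv R ` {..<NN}) \<noteq> {}"
    by (rule cone_hit[OF R subset_refl _ nn _ ux unz]) (auto simp: x_def)
  then show "ray u \<inter> facet d r w c R \<noteq> {}" unfolding facet_def Phi_rem_z[OF R] .
qed

lemma gen_of_generic: assumes u: "u \<in> carrier_vec NN" and unz: "u \<noteq> 0\<^sub>v NN"
  and g: "generic_ray d r w c (ray u)"
  shows "cr.gen u"
  unfolding cr.gen_def
proof (intro ballI allI impI notI)
  fix R j assume R: "R \<in> Rset d r c" and j: "j < NN" and z0: "cr.D R j u = 0" and ind: "cr.ind R u"
  define x where "x = vec NN (\<lambda>j. cr.D R j u / det (AA R))"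
  have ux: "u = AA R *\<^sub>v x" unfolding x_def by (rule cr.D_repr[OF R u])
  have nn: "\<forall>k<NN. 0 \<le> x $ k" unfolding x_def using ind unfolding cr.ind_def
    by (auto simp: zero_le_divide_iff zero_le_mult_iff)
  have "ray u \<inter> conv_hull NN (rowv R ` ({..<NN} - {j})) \<noteq> {}"
    by (rule cone_hit[OF R _ _ nn _ ux unz]) (use z0 in \<open>auto simp: x_def\<close>)
  moreover have "c (j+1) \<in> G - {z}" using j c_eq_iff[of "j+1" "NN+1"] z_eq unfolding G_eq by auto
  then have "ray u \<inter> conv_hull NN (Phi r w (rem (rem R z) (c (j+1)))) = {}"
    using g R unfolding generic_ray_def by blast
  ultimately show False using Phi_ridge[OF R j] by simp
qed

lemma deg_F: assumes u: "u \<in> carrier_vec NN" and unz: "u \<noteq> 0\<^sub>v NN"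
  shows "deg d r w c (ray u) = cr.F u"
proof -
  have gs: "gsgn d r w c R = sgn (det (AA R))" for R
  proof -
    have "mat NN NN (\<lambda>(j, k). phi w (cls r R (c (j + 1))) (c (j + 1)) $ k) = transpose_mat (AA R)"
      unfolding AA_def rowv_def by (intro eq_matI) auto
    then show ?thesis unfolding gsgn_def using det_transpose[OF AA_car] by simp
  qed
  have "deg d r w c (ray u) = (\<Sum>R\<in>Rset d r c. if ray u \<inter> facet d r w c R \<noteq> {} then sgnR d r w c R else 0)"
    unfolding deg_def by (rule sum.inter_filter[OF Rset_fin])
  also have "\<dots> = (\<Sum>R\<in>Rset d r c. cr.h R u)"
    unfolding cr.h_def sgnR_def gs using hit_iff[OF _ u unz] by (intro sum.cong) auto
  finally show ?thesis unfolding cr.F_def .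
qed

end

theorem lemma9:
  fixes d r :: nat and w c :: "nat \<Rightarrow> real vec" and u v :: "real vec"
  assumes "2 \<le> r"
    and "regular_simplex_centered r w"
    and "bmz d r c"
    and "suff_general_position d r w c"
    and "u \<in> carrier_vec (bmzN d r)" and "u \<noteq> 0\<^sub>v (bmzN d r)"
    and "v \<in> carrier_vec (bmzN d r)" and "v \<noteq> 0\<^sub>v (bmzN d r)"
    and "generic_ray d r w c (ray u)"
    and "generic_ray d r w c (ray v)"
  shows "deg d r w c (ray u) = deg d r w c (ray v)"
proof -
  interpret bmzctx d r w c by unfold_locales (use assms in auto)
  have "cr.F u = cr.F v"
    by (rule cr.main[OF assms(5,7) gen_of_generic[OF assms(5,6,9)] gen_of_generic[OF assms(7,8,10)]])
  then show ?thesis using deg_F[OF assms(5,6)] deg_F[OF assms(7,8)] by simp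
qed


end
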